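(* Let $G$ be a topological group and $A$ a topological $G$-module, and suppose that for every $p\ge 0$ the augmented column complex $0\to A_c^p(G,A)\xrightarrow{\epsilon}A_{lc}^{p,0}(G,A)\xrightarrow{d_v}A_{lc}^{p,1}(G,A)\xrightarrow{d_v}\cdots$ is exact. Then the inclusion $C_c^*(G,A)\hookrightarrow C_{lc}^*(G,A)$ induces an isomorphism in cohomology.
   Context: A topological $G$-module is an abelian topological group $A$ with an action of $G$ by group automorphisms such that $G\times A\to A$ is continuous. For an identity neighbourhood $U$ of $G$ put $\Gamma_U^0:=G$ and, for $q\ge1$, $\Gamma_U^q:=\{(g_0,\dots,g_q)\in G^{q+1}\mid g_i^{-1}g_j\in U\ \forall i,j\}$. $G$ acts on maps $f\colon G^{n+1}\to A$ by $(g.f)(g_0,\dots,g_n)=g.f(g^{-1}g_0,\dots,g^{-1}g_n)$, with differential $df(g_0,\dots,g_{n+1})=\sum_i(-1)^if(g_0,\dots,\widehat{g_i},\dots,g_{n+1})$. $C_c^n(G,A)$ is the complex of continuous $G$-equivariant maps $G^{n+1}\to A$; $C_{lc}^n(G,A)$ is the complex of $G$-equivariant maps $G^{n+1}\to A$ whose restriction to $\Gamma_U^n$ is continuous for some identity neighbourhood $U$. $A_c^p(G,A):=C(G^{p+1},A)$ (all continuous maps). $A_{lc}^{p,q}(G,A)$ is the group of maps $f\colon G^{p+1}\times G^{q+1}\to A$ whose restriction to $G^{p+1}\times\Gamma_U^q$ is continuous for some identity neighbourhood $U$, with $d_vf(\vec x,y_0,\dots,y_{q+1})=(-1)^p\sum_{i=0}^{q+1}(-1)^if(\vec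 x,y_0,\dots,\widehat{y_i},\dots,y_{q+1})$, and the augmentation is $\epsilon(f)(\vec x,y_0)=f(\vec x)$. *)

theory Defs
  imports "HOL-Analysis.Analysis" "HOL-Algebra.Group"
begin

definition topological_group :: "('g, 'b) monoid_scheme \<Rightarrow> 'g topology \<Rightarrow> bool" where
  "topological_group G TG \<longleftrightarrow> group G \<and> topspace TG = carrier G
     \<and> continuous_map (prod_topology TG TG) TG (\<lambda>(x, y). x \<otimes>\<^bsub>G\<^esub> y)
     \<and> continuous_map TG TG (\<lambda>x. inv\<^bsub>G\<^esub> x)"

definition topological_ab_group :: "'a::ab_group_add topology \<Rightarrow> bool" where
  "topological_ab_group TA \<longleftrightarrow> topspace TA = UNIV
     \<and> continuous_map (prod_topology TA TA) TA (\<lambda>(x, y). x + y)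
     \<and> continuous_map TA TA uminus"

definition topological_G_module ::
  "('g, 'b) monoid_scheme \<Rightarrow> 'g topology \<Rightarrow> 'a::ab_group_add topology \<Rightarrow> ('g \<Rightarrow> 'a \<Rightarrow> 'a) \<Rightarrow> bool" where
  "topological_G_module G TG TA act \<longleftrightarrow> topological_group G TG \<and> topological_ab_group TA
     \<and> (\<forall>g\<in>carrier G. bij (act g) \<and> (\<forall>a b. act g (a + b) = act g a + act g b))
     \<and> (\<forall>a. act \<one>\<^bsub>G\<^esub> a = a)
     \<and> (\<forall>g\<in>carrier G. \<forall>h\<in>carrier G. \<forall>a. act (g \<otimes>\<^bsub>G\<^esub> h) a = act g (act h a))
     \<and> continuous_map (prod_topology TG TA) TA (\<lambda>(g, a). act g a)"

text \<open>An element of G^(n+1) is an extensional function on {..n} with values in carrier G.\<close>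

definition tuples :: "('g, 'b) monoid_scheme \<Rightarrow> nat \<Rightarrow> (nat \<Rightarrow> 'g) set" where
  "tuples G n = PiE {..n} (\<lambda>_. carrier G)"

definition tuple_top :: "'g topology \<Rightarrow> nat \<Rightarrow> (nat \<Rightarrow> 'g) topology" where
  "tuple_top TG n = product_topology (\<lambda>_. TG) {..n}"

definition identity_nbhd :: "('g, 'b) monoid_scheme \<Rightarrow> 'g topology \<Rightarrow> 'g set \<Rightarrow> bool" where
  "identity_nbhd G TG U \<longleftrightarrow> U \<subseteq> carrier G \<and> (\<exists>V. openin TG V \<and> \<one>\<^bsub>G\<^esub> \<in> V \<and> V \<subseteq> U)"

text \<open>For q = 0 this is all of G^1 = G, since the identity lies in U.\<close>
definition Gamma :: "('g, 'b) monoid_scheme \<Rightarrow> 'g set \<Rightarrow> nat \<Rightarrow> (nat \<Rightarrow> 'g) set" where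
  "Gamma G U q = {x \<in> tuples G q. \<forall>i\<le>q. \<forall>j\<le>q. inv\<^bsub>G\<^esub> (x i) \<otimes>\<^bsub>G\<^esub> x j \<in> U}"

text \<open>face n i: G^(n+2) -> G^(n+1), omitting the i-th entry.\<close>
definition face :: "nat \<Rightarrow> nat \<Rightarrow> (nat \<Rightarrow> 'g) \<Rightarrow> (nat \<Rightarrow> 'g)" where
  "face n i x = (\<lambda>j\<in>{..n}. if j < i then x j else x (Suc j))"

definition alt :: "nat \<Rightarrow> 'a::ab_group_add \<Rightarrow> 'a" where
  "alt i a = (if even i then a else - a)"

text \<open>Cochains are represented by maps that vanish outside G^(n+1).\<close>

definition supported :: "('g, 'b) monoid_scheme \<Rightarrow> nat \<Rightarrow> ((nat \<Rightarrow> 'g) \<Rightarrow> 'a::zero) \<Rightarrow> bool" where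
  "supported G n f \<longleftrightarrow> (\<forall>x. x \<notin> tuples G n \<longrightarrow> f x = 0)"

definition equivariant ::
  "('g, 'b) monoid_scheme \<Rightarrow> ('g \<Rightarrow> 'a \<Rightarrow> 'a) \<Rightarrow> nat \<Rightarrow> ((nat \<Rightarrow> 'g) \<Rightarrow> 'a) \<Rightarrow> bool" where
  "equivariant G act n f \<longleftrightarrow>
     (\<forall>g\<in>carrier G. \<forall>x\<in>tuples G n. f (\<lambda>i\<in>{..n}. g \<otimes>\<^bsub>G\<^esub> x i) = act g (f x))"

definition dhom :: "('g, 'b) monoid_scheme \<Rightarrow> nat \<Rightarrow> ((nat \<Rightarrow> 'g) \<Rightarrow> 'a::ab_group_add)
                     \<Rightarrow> ((nat \<Rightarrow> 'g) \<Rightarrow> 'a)" where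
  "dhom G n f = (\<lambda>x. if x \<in> tuples G (Suc n) then (\<Sum>i\<le>Suc n. alt i (f (face n i x))) else 0)"

definition Cc :: "('g, 'b) monoid_scheme \<Rightarrow> 'g topology \<Rightarrow> 'a::ab_group_add topology
                   \<Rightarrow> ('g \<Rightarrow> 'a \<Rightarrow> 'a) \<Rightarrow> nat \<Rightarrow> ((nat \<Rightarrow> 'g) \<Rightarrow> 'a) set" where
  "Cc G TG TA act n = {f. supported G n f \<and> equivariant G act n f
                          \<and> continuous_map (tuple_top TG n) TA f}"

definition Clc :: "('g, 'b) monoid_scheme \<Rightarrow> 'g topology \<Rightarrow> 'a::ab_group_add topology
                   \<Rightarrow> ('g \<Rightarrow> 'a \<Rightarrow> 'a) \<Rightarrow> nat \<Rightarrow> ((nat \<Rightarrow> 'g) \<Rightarrow> 'a) set" where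
  "Clc G TG TA act n = {f. supported G n f \<and> equivariant G act n f
      \<and> (\<exists>U. identity_nbhd G TG U
             \<and> continuous_map (subtopology (tuple_top TG n) (Gamma G U n)) TA f)}"

definition cocycles :: "('g, 'b) monoid_scheme \<Rightarrow> (nat \<Rightarrow> ((nat \<Rightarrow> 'g) \<Rightarrow> 'a::ab_group_add) set)
                        \<Rightarrow> nat \<Rightarrow> ((nat \<Rightarrow> 'g) \<Rightarrow> 'a) set" where
  "cocycles G K n = {f \<in> K n. dhom G n f = (\<lambda>_. 0)}"

definition coboundaries :: "('g, 'b) monoid_scheme \<Rightarrow> (nat \<Rightarrow> ((nat \<Rightarrow> 'g) \<Rightarrow> 'a::ab_group_add) set)
                        \<Rightarrow> nat \<Rightarrow> ((nat \<Rightarrow> 'g) \<Rightarrow> 'a) set" where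
  "coboundaries G K n = (case n of 0 \<Rightarrow> {\<lambda>_. 0} | Suc m \<Rightarrow> dhom G m ` K m)"

definition cls :: "('g, 'b) monoid_scheme \<Rightarrow> (nat \<Rightarrow> ((nat \<Rightarrow> 'g) \<Rightarrow> 'a::ab_group_add) set)
                   \<Rightarrow> nat \<Rightarrow> ((nat \<Rightarrow> 'g) \<Rightarrow> 'a) \<Rightarrow> ((nat \<Rightarrow> 'g) \<Rightarrow> 'a) set" where
  "cls G K n z = (\<lambda>b. (\<lambda>x. z x + b x)) ` coboundaries G K n"

definition cohom :: "('g, 'b) monoid_scheme \<Rightarrow> (nat \<Rightarrow> ((nat \<Rightarrow> 'g) \<Rightarrow> 'a::ab_group_add) set)
                     \<Rightarrow> nat \<Rightarrow> ((nat \<Rightarrow> 'g) \<Rightarrow> 'a) set set" where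
  "cohom G K n = cls G K n ` cocycles G K n"

definition induced_map :: "('g, 'b) monoid_scheme \<Rightarrow> (nat \<Rightarrow> ((nat \<Rightarrow> 'g) \<Rightarrow> 'a::ab_group_add) set)
     \<Rightarrow> (nat \<Rightarrow> ((nat \<Rightarrow> 'g) \<Rightarrow> 'a) set) \<Rightarrow> nat
     \<Rightarrow> ((nat \<Rightarrow> 'g) \<Rightarrow> 'a) set \<Rightarrow> ((nat \<Rightarrow> 'g) \<Rightarrow> 'a) set" where
  "induced_map G K L n c = cls G L n (SOME z. z \<in> c)"

definition Ac :: "('g, 'b) monoid_scheme \<Rightarrow> 'g topology \<Rightarrow> 'a::ab_group_add topology
                  \<Rightarrow> nat \<Rightarrow> ((nat \<Rightarrow> 'g) \<Rightarrow> 'a) set" where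
  "Ac G TG TA p = {f. supported G p f \<and> continuous_map (tuple_top TG p) TA f}"

definition Alc :: "('g, 'b) monoid_scheme \<Rightarrow> 'g topology \<Rightarrow> 'a::ab_group_add topology
                  \<Rightarrow> nat \<Rightarrow> nat \<Rightarrow> ((nat \<Rightarrow> 'g) \<times> (nat \<Rightarrow> 'g) \<Rightarrow> 'a) set" where
  "Alc G TG TA p q = {f. (\<forall>x y. (x, y) \<notin> tuples G p \<times> tuples G q \<longrightarrow> f (x, y) = 0)
      \<and> (\<exists>U. identity_nbhd G TG U
             \<and> continuous_map (subtopology (prod_topology (tuple_top TG p) (tuple_top TG q))
                                            (tuples G p \<times> Gamma G U q)) TA f)}"

definition dv :: "('g, 'b) monoid_scheme \<Rightarrow> nat \<Rightarrow> nat
                  \<Rightarrow> ((nat \<Rightarrow> 'g) \<times> (nat \<Rightarrow> 'g) \<Rightarrow> 'a::ab_group_add)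
                  \<Rightarrow> ((nat \<Rightarrow> 'g) \<times> (nat \<Rightarrow> 'g) \<Rightarrow> 'a)" where
  "dv G p q f = (\<lambda>(x, y). if (x, y) \<in> tuples G p \<times> tuples G (Suc q)
       then alt p (\<Sum>i\<le>Suc q. alt i (f (x, face q i y))) else 0)"

definition aug :: "('g, 'b) monoid_scheme \<Rightarrow> nat \<Rightarrow> ((nat \<Rightarrow> 'g) \<Rightarrow> 'a::ab_group_add)
                   \<Rightarrow> ((nat \<Rightarrow> 'g) \<times> (nat \<Rightarrow> 'g) \<Rightarrow> 'a)" where
  "aug G p f = (\<lambda>(x, y). if (x, y) \<in> tuples G p \<times> tuples G 0 then f x else 0)"

definition column_exact :: "('g, 'b) monoid_scheme \<Rightarrow> 'g topology \<Rightarrow> 'a::ab_group_add topology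
                            \<Rightarrow> nat \<Rightarrow> bool" where
  "column_exact G TG TA p \<longleftrightarrow>
     (\<forall>f\<in>Ac G TG TA p. aug G p f = (\<lambda>_. 0) \<longrightarrow> f = (\<lambda>_. 0))
     \<and> {f \<in> Alc G TG TA p 0. dv G p 0 f = (\<lambda>_. 0)} = aug G p ` Ac G TG TA p
     \<and> (\<forall>q. {f \<in> Alc G TG TA p (Suc q). dv G p (Suc q) f = (\<lambda>_. 0)}
             = dv G p q ` Alc G TG TA p q)"

end

theory Submission imports Defs begin

declare sum.atMost_Suc [simp del]

lemma alt_0 [simp]: "alt 0 v = v" by (simp add: alt_def)
lemma alt_zero [simp]: "alt i (0::'a::ab_group_add) = 0" by (simp add: alt_def)
lemma alt_Suc: "alt (Suc i) v = - alt i v" by (simp add: alt_def)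
lemma alt_alt: "alt i (alt j v) = alt (i + j) v" by (auto simp: alt_def)
lemma alt_add: "alt i (a + b) = alt i a + alt i (b::'a::ab_group_add)" by (simp add: alt_def)
lemma alt_diff: "alt i (a - b) = alt i a - alt i (b::'a::ab_group_add)" by (simp add: alt_def)
lemma alt_neg: "alt i (- a) = - alt i (a::'a::ab_group_add)" by (simp add: alt_def)
lemma alt_sum: "alt i (sum f S) = (\<Sum>s\<in>S. alt i (f s))"
  by (simp add: alt_def sum_negf)
lemma alt_cong2: "even i = even j \<Longrightarrow> alt i v = alt j v" by (simp add: alt_def)
lemma alt_eq_0_iff [simp]: "alt i v = 0 \<longleftrightarrow> v = 0" by (simp add: alt_def)
lemma alt_self [simp]: "alt i (alt i v) = v" by (auto simp: alt_def)

lemma sum_split_shift: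
  "(\<Sum>i\<le>a + Suc b. f i) = (\<Sum>i\<le>a. f i) + (\<Sum>j\<le>b. f (Suc a + j))"
  by (induction b) (simp_all add: add.assoc sum.atMost_Suc)

section \<open>Double face cancellation\<close>

lemma dd_cancel:
  fixes T :: "nat \<Rightarrow> nat \<Rightarrow> 'a::ab_group_add"
  assumes T: "\<And>i j. i \<le> j \<Longrightarrow> j \<le> Suc n \<Longrightarrow> T i j = T (Suc j) i"
  shows "(\<Sum>i\<le>Suc (Suc n). alt i (\<Sum>j\<le>Suc n. alt j (T i j))) = 0"
proof -
  define g where "g = (\<lambda>p. alt (fst p + snd p) (T (fst p) (snd p)))"
  define A where "A = {p \<in> {..Suc (Suc n)} \<times> {..Suc n}. snd p < fst p}"
  define B where "B = {p \<in> {..Suc (Suc n)} \<times> {..Suc n}. fst p \<le> snd p}"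
  have "(\<Sum>i\<le>Suc (Suc n). alt i (\<Sum>j\<le>Suc n. alt j (T i j)))
      = (\<Sum>i\<le>Suc (Suc n). \<Sum>j\<le>Suc n. g (i, j))"
    by (simp only: alt_sum alt_alt g_def fst_conv snd_conv)
  also have "\<dots> = sum g ({..Suc (Suc n)} \<times> {..Suc n})"
    by (simp add: sum.cartesian_product)
  also have "{..Suc (Suc n)} \<times> {..Suc n} = A \<union> B" by (auto simp: A_def B_def)
  also have "sum g (A \<union> B) = sum g A + sum g B"
    by (rule sum.union_disjoint) (auto simp: A_def B_def)
  also have "sum g B = sum (\<lambda>p. - g p) A"
  proof (rule sum.reindex_bij_witness[where i = "\<lambda>p. (snd p, fst p - 1)" and j = "\<lambda>p. (Suc (snd p), fst p)"])
    fix p assume p: "p \<in> B"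
    then show "(snd (Suc (snd p), fst p), fst (Suc (snd p), fst p) - 1) = p" by auto
    show "(Suc (snd p), fst p) \<in> A" using p by (auto simp: A_def B_def)
    show "- g (Suc (snd p), fst p) = g p"
      using p T[of "fst p" "snd p"] by (auto simp: B_def g_def alt_Suc add.commute)
  next
    fix p assume p: "p \<in> A"
    then show "(Suc (snd (snd p, fst p - 1)), fst (snd p, fst p - 1)) = p" by (cases p) (auto simp: A_def)
    show "(snd p, fst p - 1) \<in> B" using p by (auto simp: A_def B_def)
  qed
  also have "sum g A + sum (\<lambda>p. - g p) A = 0" by (simp add: sum_negf)
  finally show ?thesis .
qed

lemma face_face:
  assumes "i \<le> j"
  shows "face n j (face (Suc n) i x) = face n i (face (Suc n) (Suc j) x)"
  using assms by (auto simp: face_def fun_eq_iff)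

lemma face_tuples: "x \<in> tuples G (Suc n) \<Longrightarrow> face n i x \<in> tuples G n"
  by (auto simp: tuples_def face_def PiE_def Pi_def)

lemma tuples_ext: "x \<in> tuples G n \<Longrightarrow> i \<notin> {..n} \<Longrightarrow> x i = undefined"
  by (auto simp: tuples_def PiE_def extensional_def)

lemma tuples_mem: "x \<in> tuples G n \<Longrightarrow> i \<le> n \<Longrightarrow> x i \<in> carrier G"
  by (auto simp: tuples_def PiE_def Pi_def)

lemma topspace_tuple_top: "topspace TG = carrier G \<Longrightarrow> topspace (tuple_top TG n) = tuples G n"
  by (simp add: tuple_top_def tuples_def)

lemma Gamma_sub: "Gamma G U q \<subseteq> tuples G q" by (auto simp: Gamma_def)

lemma Gamma_mono: "U \<subseteq> V \<Longrightarrow> Gamma G U q \<subseteq> Gamma G V q" by (auto simp: Gamma_def)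

lemma face_Gamma: "y \<in> Gamma G U (Suc q) \<Longrightarrow> face q j y \<in> Gamma G U q"
  by (auto simp: Gamma_def face_tuples) (auto simp: face_def)

lemma Gamma_0: "\<one>\<^bsub>G\<^esub> \<in> U \<Longrightarrow> group G \<Longrightarrow> Gamma G U 0 = tuples G 0"
  by (auto simp: Gamma_def tuples_mem group.l_inv)

lemma tuples0_ex: "group G \<Longrightarrow> (\<lambda>i\<in>{..0::nat}. \<one>\<^bsub>G\<^esub>) \<in> tuples G 0"
  by (auto simp: tuples_def group.is_monoid monoid.one_closed)

definition tr :: "('g, 'b) monoid_scheme \<Rightarrow> nat \<Rightarrow> 'g \<Rightarrow> (nat \<Rightarrow> 'g) \<Rightarrow> (nat \<Rightarrow> 'g)" where
  "tr G n g x = (\<lambda>i\<in>{..n}. g \<otimes>\<^bsub>G\<^esub> x i)"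

definition eqv2 :: "('g, 'b) monoid_scheme \<Rightarrow> ('g \<Rightarrow> 'a \<Rightarrow> 'a) \<Rightarrow> nat \<Rightarrow> nat
     \<Rightarrow> ((nat \<Rightarrow> 'g) \<times> (nat \<Rightarrow> 'g) \<Rightarrow> 'a) \<Rightarrow> bool" where
  "eqv2 G act p q F \<longleftrightarrow> (\<forall>g\<in>carrier G. \<forall>x\<in>tuples G p. \<forall>y\<in>tuples G q.
       F (tr G p g x, tr G q g y) = act g (F (x, y)))"

definition EE :: "('g, 'b) monoid_scheme \<Rightarrow> 'g topology \<Rightarrow> 'a::ab_group_add topology
     \<Rightarrow> ('g \<Rightarrow> 'a \<Rightarrow> 'a) \<Rightarrow> nat \<Rightarrow> nat \<Rightarrow> ((nat \<Rightarrow> 'g) \<times> (nat \<Rightarrow> 'g) \<Rightarrow> 'a) set" where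
  "EE G TG TA act p q = {F \<in> Alc G TG TA p q. eqv2 G act p q F}"

definition dH :: "('g, 'b) monoid_scheme \<Rightarrow> nat \<Rightarrow> nat \<Rightarrow> ((nat \<Rightarrow> 'g) \<times> (nat \<Rightarrow> 'g) \<Rightarrow> 'a::ab_group_add)
     \<Rightarrow> ((nat \<Rightarrow> 'g) \<times> (nat \<Rightarrow> 'g) \<Rightarrow> 'a)" where
  "dH G p q F = (\<lambda>t. if t \<in> tuples G (Suc p) \<times> tuples G q
      then (\<Sum>i\<le>Suc p. alt i (F (face p i (fst t), snd t))) else 0)"

definition dV :: "('g, 'b) monoid_scheme \<Rightarrow> nat \<Rightarrow> nat \<Rightarrow> ((nat \<Rightarrow> 'g) \<times> (nat \<Rightarrow> 'g) \<Rightarrow> 'a::ab_group_add)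
     \<Rightarrow> ((nat \<Rightarrow> 'g) \<times> (nat \<Rightarrow> 'g) \<Rightarrow> 'a)" where
  "dV G p q F = (\<lambda>t. if t \<in> tuples G p \<times> tuples G (Suc q)
      then (\<Sum>j\<le>Suc q. alt j (F (fst t, face q j (snd t)))) else 0)"

definition rho :: "('g, 'b) monoid_scheme \<Rightarrow> nat \<Rightarrow> ((nat \<Rightarrow> 'g) \<Rightarrow> 'a::ab_group_add)
     \<Rightarrow> ((nat \<Rightarrow> 'g) \<times> (nat \<Rightarrow> 'g) \<Rightarrow> 'a)" where
  "rho G q u = (\<lambda>t. if t \<in> tuples G 0 \<times> tuples G q then u (snd t) else 0)"

lemma aug_apply: "aug G p f t = (if t \<in> tuples G p \<times> tuples G 0 then f (fst t) else 0)"
  by (cases t) (simp add: aug_def)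

lemma dv_apply: "dv G p q f t = alt p (dV G p q f t)"
  by (cases t) (simp add: dv_def dV_def)

lemma alt_comm: "alt i (alt j v) = alt j (alt i v)" by (simp add: alt_def)

lemma dH_diff: "dH G p q (\<lambda>t. F t - F' t) = (\<lambda>t. dH G p q F t - dH G p q F' t)"
  by (simp add: dH_def fun_eq_iff sum_subtractf alt_diff)
lemma dH_alt: "dH G p q (\<lambda>t. alt c (F t)) = (\<lambda>t. alt c (dH G p q F t))"
  by (simp add: dH_def fun_eq_iff alt_sum alt_comm[of c])
lemma dH_zero: "dH G p q (\<lambda>t. 0) = (\<lambda>t. 0)"
  by (simp add: dH_def fun_eq_iff)
lemma dV_diff: "dV G p q (\<lambda>t. F t - F' t) = (\<lambda>t. dV G p q F t - dV G p q F' t)"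
  by (simp add: dV_def fun_eq_iff sum_subtractf alt_diff)
lemma dV_alt: "dV G p q (\<lambda>t. alt c (F t)) = (\<lambda>t. alt c (dV G p q F t))"
  by (simp add: dV_def fun_eq_iff alt_sum alt_comm[of c])
lemma dV_zero: "dV G p q (\<lambda>t. 0) = (\<lambda>t. 0)"
  by (simp add: dV_def fun_eq_iff)
lemma rho_diff: "rho G q (\<lambda>t. F t - F' t) = (\<lambda>t. rho G q F t - rho G q F' t)"
  by (simp add: rho_def fun_eq_iff)
lemma rho_alt: "rho G q (\<lambda>t. alt c (F t)) = (\<lambda>t. alt c (rho G q F t))"
  by (simp add: rho_def fun_eq_iff)
lemma aug_diff: "aug G q (\<lambda>t. F t - F' t) = (\<lambda>t. aug G q F t - aug G q F' t)"
  by (simp add: aug_apply fun_eq_iff)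
lemma aug_alt: "aug G q (\<lambda>t. alt c (F t)) = (\<lambda>t. alt c (aug G q F t))"
  by (simp add: aug_apply fun_eq_iff)
lemma aug_zero: "aug G q (\<lambda>t. 0) = (\<lambda>t. 0)"
  by (simp add: aug_apply fun_eq_iff)
lemma dhom_diff: "dhom G p (\<lambda>t. F t - F' t) = (\<lambda>t. dhom G p F t - dhom G p F' t)"
  by (simp add: dhom_def fun_eq_iff sum_subtractf alt_diff)
lemma dhom_alt: "dhom G p (\<lambda>t. alt c (F t)) = (\<lambda>t. alt c (dhom G p F t))"
  by (simp add: dhom_def fun_eq_iff alt_sum alt_comm[of c])
lemma dhom_zero: "dhom G p (\<lambda>t. 0) = (\<lambda>t. 0)"
  by (simp add: dhom_def fun_eq_iff)

lemma dV_dH: "dV G (Suc p) q (dH G p q F) = dH G p (Suc q) (dV G p q F)"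
proof (rule ext)
  fix t :: "(nat \<Rightarrow> 'a) \<times> (nat \<Rightarrow> 'a)"
  show "dV G (Suc p) q (dH G p q F) t = dH G p (Suc q) (dV G p q F) t"
  proof (cases "t \<in> tuples G (Suc p) \<times> tuples G (Suc q)")
    case True
    then have "dV G (Suc p) q (dH G p q F) t
       = (\<Sum>j\<le>Suc q. \<Sum>i\<le>Suc p. alt j (alt i (F (face p i (fst t), face q j (snd t)))))"
      by (simp add: dV_def dH_def face_tuples mem_Times_iff alt_sum)
    also have "\<dots> = (\<Sum>i\<le>Suc p. \<Sum>j\<le>Suc q. alt i (alt j (F (face p i (fst t), face q j (snd t)))))"
      by (subst sum.swap) (simp add: alt_comm)
    also have "\<dots> = dH G p (Suc q) (dV G p q F) t"
      using True by (simp add: dV_def dH_def face_tuples mem_Times_iff alt_sum)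
    finally show ?thesis .
  next
    case False
    then show ?thesis unfolding dV_def[of G "Suc p" q] dH_def[of G p "Suc q"] by simp
  qed
qed

lemma dH_dH: "dH G (Suc p) q (dH G p q F) = (\<lambda>t. 0)"
proof (rule ext)
  fix t :: "(nat \<Rightarrow> 'a) \<times> (nat \<Rightarrow> 'a)"
  show "dH G (Suc p) q (dH G p q F) t = 0"
  proof (cases "t \<in> tuples G (Suc (Suc p)) \<times> tuples G q")
    case True
    then have "dH G (Suc p) q (dH G p q F) t
       = (\<Sum>i\<le>Suc (Suc p). alt i (\<Sum>j\<le>Suc p. alt j (F (face p j (face (Suc p) i (fst t)), snd t))))"
      by (simp add: dH_def face_tuples mem_Times_iff)
    also have "\<dots> = 0"
      by (rule dd_cancel) (simp add: face_face)
    finally show ?thesis .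
  next
    case False
    then show ?thesis unfolding dH_def[of G "Suc p" q] by simp
  qed
qed

lemma dV_dV: "dV G p (Suc q) (dV G p q F) = (\<lambda>t. 0)"
proof (rule ext)
  fix t :: "(nat \<Rightarrow> 'a) \<times> (nat \<Rightarrow> 'a)"
  show "dV G p (Suc q) (dV G p q F) t = 0"
  proof (cases "t \<in> tuples G p \<times> tuples G (Suc (Suc q))")
    case True
    then have "dV G p (Suc q) (dV G p q F) t
       = (\<Sum>i\<le>Suc (Suc q). alt i (\<Sum>j\<le>Suc q. alt j (F (fst t, face q j (face (Suc q) i (snd t))))))"
      by (simp add: dV_def face_tuples mem_Times_iff)
    also have "\<dots> = 0"
      by (rule dd_cancel) (simp add: face_face)
    finally show ?thesis .
  next
    case False
    then show ?thesis unfolding dV_def[of G p "Suc q"] by simp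
  qed
qed

lemma dV_rho: "dV G 0 q (rho G q u) = rho G (Suc q) (dhom G q u)"
  by (auto simp: fun_eq_iff dV_def rho_def dhom_def mem_Times_iff face_tuples)

lemma dH_rho: "dH G 0 q (rho G q u) = (\<lambda>t. 0)"
  by (auto simp: fun_eq_iff dH_def rho_def mem_Times_iff face_tuples alt_Suc sum.atMost_Suc)

lemma dH_aug: "dH G p 0 (aug G p f) = aug G (Suc p) (dhom G p f)"
  by (auto simp: fun_eq_iff dH_def aug_apply dhom_def mem_Times_iff face_tuples)

lemma dV_aug: "dV G p 0 (aug G p f) = (\<lambda>t. 0)"
  by (auto simp: fun_eq_iff dV_def aug_apply mem_Times_iff face_tuples alt_Suc sum.atMost_Suc)

lemma rho_inj:
  assumes "group G" "supported G q u" "rho G q u = (\<lambda>t. 0)"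
  shows "u = (\<lambda>t. 0)"
proof
  fix y show "u y = 0"
  proof (cases "y \<in> tuples G q")
    case True
    have "rho G q u ((\<lambda>i\<in>{..0::nat}. \<one>\<^bsub>G\<^esub>), y) = 0" using assms(3) by simp
    then show ?thesis using True tuples0_ex[OF assms(1)] by (simp add: rho_def)
  next
    case False then show ?thesis using assms(2) by (simp add: supported_def)
  qed
qed

lemma aug_inj:
  assumes "group G" "supported G p u" "aug G p u = (\<lambda>t. 0)"
  shows "u = (\<lambda>t. 0)"
proof
  fix y show "u y = 0"
  proof (cases "y \<in> tuples G p")
    case True
    have "aug G p u (y, (\<lambda>i\<in>{..0::nat}. \<one>\<^bsub>G\<^esub>)) = 0" using assms(3) by simp
    then show ?thesis using True tuples0_ex[OF assms(1)] by (simp add: aug_apply)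
  next
    case False then show ?thesis using assms(2) by (simp add: supported_def)
  qed
qed


locale tgm =
  fixes G :: "('g, 'b) monoid_scheme" (structure)
    and TG :: "'g topology" and TA :: "'a::ab_group_add topology" and act :: "'g \<Rightarrow> 'a \<Rightarrow> 'a"
  assumes tgm: "topological_G_module G TG TA act"
begin

lemma grp: "group G" using tgm by (simp add: topological_G_module_def topological_group_def)

sublocale group G by (rule grp)

lemma topG: "topspace TG = carrier G"
  using tgm by (simp add: topological_G_module_def topological_group_def)
lemma mulc: "continuous_map (prod_topology TG TG) TG (\<lambda>(x, y). x \<otimes> y)"
  using tgm by (simp add: topological_G_module_def topological_group_def)
lemma invc: "continuous_map TG TG (\<lambda>x. inv x)"
  using tgm by (simp add: topological_G_module_def topological_group_def)
lemma topA: "topspace TA = UNIV"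
  using tgm by (simp add: topological_G_module_def topological_ab_group_def)
lemma addc: "continuous_map (prod_topology TA TA) TA (\<lambda>(x, y). x + y)"
  using tgm by (simp add: topological_G_module_def topological_ab_group_def)
lemma negc: "continuous_map TA TA uminus"
  using tgm by (simp add: topological_G_module_def topological_ab_group_def)
lemma act_add: "g \<in> carrier G \<Longrightarrow> act g (a + b) = act g a + act g b"
  using tgm by (simp add: topological_G_module_def)
lemma act_one: "act \<one> a = a"
  using tgm by (simp add: topological_G_module_def)
lemma act_mult: "g \<in> carrier G \<Longrightarrow> h \<in> carrier G \<Longrightarrow> act (g \<otimes> h) a = act g (act h a)"
  using tgm by (simp add: topological_G_module_def)
lemma actc: "continuous_map (prod_topology TG TA) TA (\<lambda>(g, a). act g a)"
  using tgm by (simp add: topological_G_module_def)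

lemma act_zero: "g \<in> carrier G \<Longrightarrow> act g 0 = 0"
  using act_add[of g 0 0] by simp
lemma act_neg: "g \<in> carrier G \<Longrightarrow> act g (- a) = - act g a"
proof -
  assume g: "g \<in> carrier G"
  have "act g a + act g (- a) = 0" using act_add[of g a "- a"] act_zero[of g] g by simp
  then show ?thesis by (metis neg_eq_iff_add_eq_0)
qed
lemma act_diff: "g \<in> carrier G \<Longrightarrow> act g (a - b) = act g a - act g b"
  using act_add[of g a "- b"] act_neg[of g b] by simp
lemma act_alt: "g \<in> carrier G \<Longrightarrow> act g (alt i a) = alt i (act g a)"
  by (simp add: alt_def act_neg)
lemma act_sum:
  assumes "g \<in> carrier G" "finite S"
  shows "act g (\<Sum>s\<in>S. f s) = (\<Sum>s\<in>S. act g (f s))"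
  using assms(2) by (induction S rule: finite_induct) (simp_all add: act_zero act_add assms(1))

lemma cont_add: "continuous_map X TA f \<Longrightarrow> continuous_map X TA g \<Longrightarrow> continuous_map X TA (\<lambda>t. f t + g t)"
  using continuous_map_compose[OF continuous_map_pairedI addc, of X f g] by (simp add: o_def)
lemma cont_neg: "continuous_map X TA f \<Longrightarrow> continuous_map X TA (\<lambda>t. - f t)"
  using continuous_map_compose[OF _ negc, of X f] by (simp add: o_def)
lemma cont_zero: "continuous_map X TA (\<lambda>t. 0)"
  by (simp add: topA)
lemma cont_diff: "continuous_map X TA f \<Longrightarrow> continuous_map X TA g \<Longrightarrow> continuous_map X TA (\<lambda>t. f t - g t)"
  using cont_add[OF _ cont_neg, of X f g] by simp
lemma cont_alt: "continuous_map X TA f \<Longrightarrow> continuous_map X TA (\<lambda>t. alt i (f t))"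
  by (cases "even i") (simp_all add: alt_def cont_neg)
lemma cont_sum: "finite S \<Longrightarrow> (\<And>s. s \<in> S \<Longrightarrow> continuous_map X TA (f s))
   \<Longrightarrow> continuous_map X TA (\<lambda>t. \<Sum>s\<in>S. f s t)"
  by (induction S rule: finite_induct) (simp_all add: cont_zero cont_add topA)
lemma cont_mul: "continuous_map X TG f \<Longrightarrow> continuous_map X TG g \<Longrightarrow> continuous_map X TG (\<lambda>t. f t \<otimes> g t)"
  using continuous_map_compose[OF continuous_map_pairedI mulc, of X f g] by (simp add: o_def)
lemma cont_inv: "continuous_map X TG f \<Longrightarrow> continuous_map X TG (\<lambda>t. inv (f t))"
  using continuous_map_compose[OF _ invc, of X f] by (simp add: o_def)
lemma cont_act: "continuous_map X TG f \<Longrightarrow> continuous_map X TA g \<Longrightarrow> continuous_map X TA (\<lambda>t. act (f t) (g t))"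
  using continuous_map_compose[OF continuous_map_pairedI actc, of X f g] by (simp add: o_def)

lemma top_tuple: "topspace (tuple_top TG n) = tuples G n"
  by (simp add: topspace_tuple_top topG)

lemma cont_into_tuple:
  assumes "\<And>t. t \<in> topspace X \<Longrightarrow> h t \<in> extensional {..n}"
    and "\<And>k. k \<le> n \<Longrightarrow> continuous_map X TG (\<lambda>t. h t k)"
  shows "continuous_map X (tuple_top TG n) h"
  using assms by (auto simp: tuple_top_def continuous_map_componentwise)

lemma cont_comp_proj:
  "continuous_map X (tuple_top TG n) h \<Longrightarrow> k \<le> n \<Longrightarrow> continuous_map X TG (\<lambda>t. h t k)"
  by (auto simp: tuple_top_def continuous_map_componentwise)

lemma cont_face:
  assumes "continuous_map X (tuple_top TG (Suc n)) h"
  shows "continuous_map X (tuple_top TG n) (\<lambda>t. face n i (h t))"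
proof (rule cont_into_tuple)
  fix t show "face n i (h t) \<in> extensional {..n}" by (simp add: face_def)
next
  fix k assume k: "k \<le> n"
  show "continuous_map X TG (\<lambda>t. face n i (h t) k)"
  proof (cases "k < i")
    case True
    then show ?thesis using k cont_comp_proj[OF assms, of k] by (simp add: face_def)
  next
    case False
    then show ?thesis using k cont_comp_proj[OF assms, of "Suc k"] by (simp add: face_def)
  qed
qed

lemma cont_tr:
  assumes "continuous_map X TG g" "continuous_map X (tuple_top TG n) h"
  shows "continuous_map X (tuple_top TG n) (\<lambda>t. tr G n (g t) (h t))"
proof (rule cont_into_tuple)
  fix t show "tr G n (g t) (h t) \<in> extensional {..n}" by (simp add: tr_def)
next
  fix k assume k: "k \<le> n"
  show "continuous_map X TG (\<lambda>t. tr G n (g t) (h t) k)"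
    using k cont_mul[OF assms(1) cont_comp_proj[OF assms(2) k]] by (simp add: tr_def)
qed

definition XX :: "nat \<Rightarrow> nat \<Rightarrow> 'g set \<Rightarrow> ((nat \<Rightarrow> 'g) \<times> (nat \<Rightarrow> 'g)) topology" where
  "XX p q U = subtopology (prod_topology (tuple_top TG p) (tuple_top TG q)) (tuples G p \<times> Gamma G U q)"

lemma top_XX: "topspace (XX p q U) = tuples G p \<times> Gamma G U q"
  using Gamma_sub by (auto simp: XX_def top_tuple)

lemma XX_fst: "continuous_map (XX p q U) (tuple_top TG p) fst"
  by (simp add: XX_def continuous_map_subtopology_fst)
lemma XX_snd: "continuous_map (XX p q U) (tuple_top TG q) snd"
  by (simp add: XX_def continuous_map_subtopology_snd)
lemma XX_snd_sub: "continuous_map (XX p q U) (subtopology (tuple_top TG q) (Gamma G U q)) snd"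
  by (rule continuous_map_into_subtopology[OF XX_snd]) (auto simp: top_XX)

lemma into_XX:
  assumes "continuous_map X (tuple_top TG p) f" "continuous_map X (tuple_top TG q) g"
    and "\<And>t. t \<in> topspace X \<Longrightarrow> f t \<in> tuples G p \<and> g t \<in> Gamma G U q"
  shows "continuous_map X (XX p q U) (\<lambda>t. (f t, g t))"
  unfolding XX_def
  by (rule continuous_map_into_subtopology) (use assms in \<open>auto intro!: continuous_map_pairedI\<close>)

lemma pull:
  "continuous_map (XX p q U) TA F \<Longrightarrow> continuous_map X (XX p q U) h \<Longrightarrow> continuous_map X TA (\<lambda>t. F (h t))"
  using continuous_map_compose[of X "XX p q U" h TA F] by (simp add: o_def)

lemma XX_mono:
  "U' \<subseteq> U \<Longrightarrow> continuous_map (XX p q U) TA F \<Longrightarrow> continuous_map (XX p q U') TA F"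
  unfolding XX_def
  by (erule continuous_map_from_subtopology_mono) (use Gamma_mono in blast)

lemma idn_carrier: "identity_nbhd G TG (carrier G)"
  unfolding identity_nbhd_def using topG by (metis openin_topspace one_closed subset_refl)
lemma idn_Int: "identity_nbhd G TG U \<Longrightarrow> identity_nbhd G TG V \<Longrightarrow> identity_nbhd G TG (U \<inter> V)"
  unfolding identity_nbhd_def by (metis Int_mono Int_iff le_infI1 openin_Int)
lemma idn_one: "identity_nbhd G TG U \<Longrightarrow> \<one> \<in> U"
  unfolding identity_nbhd_def by blast

lemma Alc_iff: "F \<in> Alc G TG TA p q \<longleftrightarrow> (\<forall>t. t \<notin> tuples G p \<times> tuples G q \<longrightarrow> F t = 0)
   \<and> (\<exists>U. identity_nbhd G TG U \<and> continuous_map (XX p q U) TA F)"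
  by (auto simp: Alc_def XX_def)

lemma EE_iff: "F \<in> EE G TG TA act p q \<longleftrightarrow> (\<forall>t. t \<notin> tuples G p \<times> tuples G q \<longrightarrow> F t = 0)
   \<and> eqv2 G act p q F \<and> (\<exists>U. identity_nbhd G TG U \<and> continuous_map (XX p q U) TA F)"
  by (auto simp: EE_def Alc_iff)

lemma inv_cancel: "g \<in> carrier G \<Longrightarrow> a \<in> carrier G \<Longrightarrow> b \<in> carrier G
   \<Longrightarrow> inv (g \<otimes> a) \<otimes> (g \<otimes> b) = inv a \<otimes> b"
  by (simp add: inv_mult_group m_assoc[symmetric]) (simp add: m_assoc)

lemma tr_tuples: "g \<in> carrier G \<Longrightarrow> x \<in> tuples G n \<Longrightarrow> tr G n g x \<in> tuples G n"
  by (auto simp: tr_def tuples_def PiE_def Pi_def)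

lemma tr_Gamma: "g \<in> carrier G \<Longrightarrow> y \<in> Gamma G U q \<Longrightarrow> tr G q g y \<in> Gamma G U q"
  unfolding Gamma_def using tr_tuples by (auto simp: tr_def inv_cancel tuples_mem)

lemma tr_tr: "g \<in> carrier G \<Longrightarrow> h \<in> carrier G \<Longrightarrow> x \<in> tuples G n
   \<Longrightarrow> tr G n g (tr G n h x) = tr G n (g \<otimes> h) x"
  by (auto simp: tr_def fun_eq_iff m_assoc tuples_mem)

lemma tr_one: "x \<in> tuples G n \<Longrightarrow> tr G n \<one> x = x"
  by (auto simp: tr_def fun_eq_iff tuples_mem tuples_ext)

lemma equivariant_tr: "equivariant G act n f \<longleftrightarrow> (\<forall>g\<in>carrier G. \<forall>x\<in>tuples G n. f (tr G n g x) = act g (f x))"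
  by (simp add: equivariant_def tr_def)

lemma tr_face: "tr G n g (face n i x) = face n i (tr G (Suc n) g x)"
  by (auto simp: tr_def face_def fun_eq_iff)

end

context tgm begin

abbreviation "E \<equiv> EE G TG TA act"
abbreviation "CC \<equiv> Cc G TG TA act"
abbreviation "CL \<equiv> Clc G TG TA act"

lemma E_zero: "(\<lambda>t. 0) \<in> E p q"
  unfolding EE_iff eqv2_def using idn_carrier cont_zero act_zero by auto

lemma E_diff:
  assumes "F \<in> E p q" "F' \<in> E p q"
  shows "(\<lambda>t. F t - F' t) \<in> E p q"
proof -
  obtain U where U: "identity_nbhd G TG U" "continuous_map (XX p q U) TA F" using assms(1) EE_iff by blast
  obtain U' where U': "identity_nbhd G TG U'" "continuous_map (XX p q U') TA F'" using assms(2) EE_iff by blast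
  have "continuous_map (XX p q (U \<inter> U')) TA (\<lambda>t. F t - F' t)"
    by (rule cont_diff; rule XX_mono[of "U \<inter> U'"]) (use U U' in auto)
  then show ?thesis using assms idn_Int[OF U(1) U'(1)]
    unfolding EE_iff eqv2_def by (auto simp: act_diff)
qed

lemma E_alt:
  assumes "F \<in> E p q"
  shows "(\<lambda>t. alt c (F t)) \<in> E p q"
  using assms cont_alt unfolding EE_iff eqv2_def by (auto simp: act_alt)

lemma E_dH:
  assumes "F \<in> E p q"
  shows "dH G p q F \<in> E (Suc p) q"
proof -
  obtain U where U: "identity_nbhd G TG U" "continuous_map (XX p q U) TA F" using assms EE_iff by blast
  have sup: "\<forall>t. t \<notin> tuples G p \<times> tuples G q \<longrightarrow> F t = 0" and eq: "eqv2 G act p q F"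
    using assms EE_iff by auto
  have c: "continuous_map (XX (Suc p) q U) TA (\<lambda>t. \<Sum>i\<le>Suc p. alt i (F (face p i (fst t), snd t)))"
  proof (intro cont_sum cont_alt pull[OF U(2)] into_XX cont_face XX_fst XX_snd)
    fix t assume "t \<in> topspace (XX (Suc p) q U)"
    then show "face p i (fst t) \<in> tuples G p \<and> snd t \<in> Gamma G U q" for i
      by (auto simp: top_XX face_tuples)
  qed simp
  have c2: "continuous_map (XX (Suc p) q U) TA (dH G p q F)"
    by (rule continuous_map_eq[OF c]) (use Gamma_sub in \<open>auto simp: top_XX dH_def\<close>)
  have e: "eqv2 G act (Suc p) q (dH G p q F)"
    unfolding eqv2_def
  proof (intro ballI)
    fix g x y assume g: "g \<in> carrier G" and x: "x \<in> tuples G (Suc p)" and y: "y \<in> tuples G q"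
    have "dH G p q F (tr G (Suc p) g x, tr G q g y)
        = (\<Sum>i\<le>Suc p. alt i (F (tr G p g (face p i x), tr G q g y)))"
      using g x y by (simp add: dH_def tr_tuples tr_face)
    also have "\<dots> = (\<Sum>i\<le>Suc p. alt i (act g (F (face p i x, y))))"
      using eq g x y by (simp add: eqv2_def face_tuples)
    also have "\<dots> = act g (dH G p q F (x, y))"
      using g x y by (simp add: dH_def act_sum act_alt)
    finally show "dH G p q F (tr G (Suc p) g x, tr G q g y) = act g (dH G p q F (x, y))" .
  qed
  show ?thesis unfolding EE_iff using U(1) c2 e by (auto simp: dH_def)
qed

lemma E_dV:
  assumes "F \<in> E p q"
  shows "dV G p q F \<in> E p (Suc q)"
proof -
  obtain U where U: "identity_nbhd G TG U" "continuous_map (XX p q U) TA F" using assms EE_iff by blast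
  have eq: "eqv2 G act p q F"
    using assms EE_iff by auto
  have c: "continuous_map (XX p (Suc q) U) TA (\<lambda>t. \<Sum>j\<le>Suc q. alt j (F (fst t, face q j (snd t))))"
  proof (intro cont_sum cont_alt pull[OF U(2)] into_XX cont_face XX_fst XX_snd)
    fix t assume "t \<in> topspace (XX p (Suc q) U)"
    then show "fst t \<in> tuples G p \<and> face q j (snd t) \<in> Gamma G U q" for j
      by (auto simp: top_XX face_Gamma)
  qed simp
  have c2: "continuous_map (XX p (Suc q) U) TA (dV G p q F)"
    by (rule continuous_map_eq[OF c]) (use Gamma_sub in \<open>auto simp: top_XX dV_def\<close>)
  have e: "eqv2 G act p (Suc q) (dV G p q F)"
    unfolding eqv2_def
  proof (intro ballI)
    fix g x y assume g: "g \<in> carrier G" and x: "x \<in> tuples G p" and y: "y \<in> tuples G (Suc q)"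
    have "dV G p q F (tr G p g x, tr G (Suc q) g y)
        = (\<Sum>j\<le>Suc q. alt j (F (tr G p g x, tr G q g (face q j y))))"
      using g x y by (simp add: dV_def tr_tuples tr_face)
    also have "\<dots> = (\<Sum>j\<le>Suc q. alt j (act g (F (x, face q j y))))"
      using eq g x y by (simp add: eqv2_def face_tuples)
    also have "\<dots> = act g (dV G p q F (x, y))"
      using g x y by (simp add: dV_def act_sum act_alt)
    finally show "dV G p q F (tr G p g x, tr G (Suc q) g y) = act g (dV G p q F (x, y))" .
  qed
  show ?thesis unfolding EE_iff using U(1) c2 e by (auto simp: dV_def)
qed

lemma E_rho:
  assumes "u \<in> CL q"
  shows "rho G q u \<in> E 0 q"
proof -
  obtain U where U: "identity_nbhd G TG U"
    "continuous_map (subtopology (tuple_top TG q) (Gamma G U q)) TA u"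
    using assms by (auto simp: Clc_def)
  have eq: "equivariant G act q u" using assms by (simp add: Clc_def)
  have c: "continuous_map (XX 0 q U) TA (rho G q u)"
    by (rule continuous_map_eq[OF continuous_map_compose[OF XX_snd_sub U(2)]])
       (use Gamma_sub in \<open>auto simp: top_XX rho_def\<close>)
  have e: "eqv2 G act 0 q (rho G q u)"
    using eq by (auto simp: eqv2_def rho_def tr_tuples equivariant_tr)
  show ?thesis unfolding EE_iff using U(1) c e by (auto simp: rho_def)
qed

lemma E_aug:
  assumes "f \<in> CC p"
  shows "aug G p f \<in> E p 0"
proof -
  have cf: "continuous_map (tuple_top TG p) TA f" and eq: "equivariant G act p f"
    using assms by (auto simp: Cc_def)
  have c: "continuous_map (XX p 0 (carrier G)) TA (aug G p f)"
    by (rule continuous_map_eq[OF continuous_map_compose[OF XX_fst cf]])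
       (use Gamma_sub in \<open>auto simp: top_XX aug_apply\<close>)
  have e: "eqv2 G act p 0 (aug G p f)"
    using eq by (auto simp: eqv2_def aug_apply tr_tuples equivariant_tr)
  show ?thesis unfolding EE_iff using idn_carrier c e by (auto simp: aug_apply)
qed

subsection \<open>Closure properties of C_c and C_lc\<close>

lemma CC_zero: "(\<lambda>t. 0) \<in> CC n"
  by (auto simp: Cc_def supported_def equivariant_def act_zero cont_zero topA)

lemma CC_diff: "f \<in> CC n \<Longrightarrow> f' \<in> CC n \<Longrightarrow> (\<lambda>t. f t - f' t) \<in> CC n"
  by (auto simp: Cc_def supported_def equivariant_def act_diff cont_diff)

lemma CC_alt: "f \<in> CC n \<Longrightarrow> (\<lambda>t. alt c (f t)) \<in> CC n"
  by (auto simp: Cc_def supported_def equivariant_def act_alt cont_alt)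

lemma CL_zero: "(\<lambda>t. 0) \<in> CL n"
  using idn_carrier by (auto simp: Clc_def supported_def equivariant_def act_zero cont_zero topA)

lemma CL_diff:
  assumes "f \<in> CL n" "f' \<in> CL n"
  shows "(\<lambda>t. f t - f' t) \<in> CL n"
proof -
  obtain U where U: "identity_nbhd G TG U"
    "continuous_map (subtopology (tuple_top TG n) (Gamma G U n)) TA f"
    using assms by (auto simp: Clc_def)
  obtain U' where U': "identity_nbhd G TG U'"
    "continuous_map (subtopology (tuple_top TG n) (Gamma G U' n)) TA f'"
    using assms by (auto simp: Clc_def)
  have "continuous_map (subtopology (tuple_top TG n) (Gamma G (U \<inter> U') n)) TA (\<lambda>t. f t - f' t)"
    by (rule cont_diff[OF continuous_map_from_subtopology_mono[OF U(2) Gamma_mono]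
                           continuous_map_from_subtopology_mono[OF U'(2) Gamma_mono]]) auto
  then show ?thesis using assms idn_Int[OF U(1) U'(1)]
    by (auto simp: Clc_def supported_def equivariant_def act_diff)
qed

lemma CL_alt: "f \<in> CL n \<Longrightarrow> (\<lambda>t. alt c (f t)) \<in> CL n"
  by (auto simp: Clc_def supported_def equivariant_def act_alt cont_alt)

lemma CC_sub_CL: "CC n \<subseteq> CL n"
  using idn_carrier by (auto simp: Cc_def Clc_def intro: continuous_map_from_subtopology)

lemma CL0_sub_CC0: "CL 0 \<subseteq> CC 0"
proof
  fix f assume f: "f \<in> CL 0"
  then obtain U where U: "identity_nbhd G TG U"
    "continuous_map (subtopology (tuple_top TG 0) (Gamma G U 0)) TA f"
    by (auto simp: Clc_def)
  have "Gamma G U 0 = topspace (tuple_top TG 0)"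
    using Gamma_0[OF idn_one[OF U(1)] grp] by (simp add: top_tuple)
  then show "f \<in> CC 0" using f U(2) by (auto simp: Cc_def Clc_def)
qed

lemma supp_CL: "f \<in> CL n \<Longrightarrow> supported G n f" by (simp add: Clc_def)
lemma supp_CC: "f \<in> CC n \<Longrightarrow> supported G n f" by (simp add: Cc_def)

end


definition cns :: "nat \<Rightarrow> 'g \<Rightarrow> (nat \<Rightarrow> 'g) \<Rightarrow> (nat \<Rightarrow> 'g)" where
  "cns n c x = (\<lambda>i\<in>{..Suc n}. if i = 0 then c else x (i - 1))"

lemma face_cns_0: "x \<in> tuples G (Suc n) \<Longrightarrow> face (Suc n) 0 (cns (Suc n) c x) = x"
  by (auto simp: face_def cns_def fun_eq_iff tuples_ext)

lemma face_cns_Suc: "face (Suc n) (Suc i) (cns (Suc n) c x) = cns n c (face n i x)"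
  by (auto simp: face_def cns_def fun_eq_iff)

lemma cns_tuples: "c \<in> carrier G \<Longrightarrow> x \<in> tuples G n \<Longrightarrow> cns n c x \<in> tuples G (Suc n)"
  by (auto simp: cns_def tuples_def PiE_def Pi_def)

lemma cns_tr: "cns n (c' \<otimes>\<^bsub>G\<^esub> c) (tr G n c' x) = tr G (Suc n) c' (cns n c x)"
  by (auto simp: cns_def tr_def fun_eq_iff)

context tgm begin

lemma cont_cns:
  assumes "continuous_map X TG c" "continuous_map X (tuple_top TG n) h"
  shows "continuous_map X (tuple_top TG (Suc n)) (\<lambda>t. cns n (c t) (h t))"
proof (rule cont_into_tuple)
  fix t show "cns n (c t) (h t) \<in> extensional {..Suc n}" by (simp add: cns_def)
next
  fix k assume k: "k \<le> Suc n"
  show "continuous_map X TG (\<lambda>t. cns n (c t) (h t) k)"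
  proof (cases k)
    case 0 then show ?thesis using assms(1) by (simp add: cns_def)
  next
    case (Suc k') then show ?thesis using k cont_comp_proj[OF assms(2), of k'] by (simp add: cns_def)
  qed
qed

lemma inv_cancel2: "g \<in> carrier G \<Longrightarrow> a \<in> carrier G \<Longrightarrow> inv (g \<otimes> a) \<otimes> g = inv a"
  by (simp add: inv_mult_group m_assoc)

end

locale tgm_col = tgm +
  assumes col: "\<forall>p. column_exact G TG TA p"
begin

lemma C0:
  assumes F: "F \<in> E p 0" and d: "dV G p 0 F = (\<lambda>t. 0)"
  shows "\<exists>f\<in>CC p. F = aug G p f"
proof -
  have "F \<in> {f \<in> Alc G TG TA p 0. dv G p 0 f = (\<lambda>_. 0)}"
    using F d by (simp add: EE_def dv_apply fun_eq_iff)
  moreover have S: "{f \<in> Alc G TG TA p 0. dv G p 0 f = (\<lambda>_. 0)} = aug G p ` Ac G TG TA p"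
    using col by (simp add: column_exact_def)
  ultimately have "F \<in> aug G p ` Ac G TG TA p" by simp
  then obtain f where f: "f \<in> Ac G TG TA p" "F = aug G p f" by blast
  define e where "e = (\<lambda>i\<in>{..0::nat}. \<one>)"
  have e: "e \<in> tuples G 0" unfolding e_def by (rule tuples0_ex[OF grp])
  have eq: "eqv2 G act p 0 F" using F by (simp add: EE_def)
  have "equivariant G act p f"
    unfolding equivariant_def
  proof (intro ballI)
    fix g x assume g: "g \<in> carrier G" and x: "x \<in> tuples G p"
    have "f (tr G p g x) = F (tr G p g x, tr G 0 g e)"
      using f(2) g x e by (simp add: aug_apply tr_tuples)
    also have "\<dots> = act g (F (x, e))" using eq g x e by (simp add: eqv2_def)
    also have "\<dots> = act g (f x)" using f(2) x e by (simp add: aug_apply)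
    finally show "f (\<lambda>i\<in>{..p}. g \<otimes> x i) = act g (f x)" by (simp add: tr_def)
  qed
  then have "f \<in> CC p" using f(1) by (simp add: Ac_def Cc_def)
  then show ?thesis using f(2) by blast
qed

lemma C1:
  assumes F: "F \<in> E p (Suc q)" and d: "dV G p (Suc q) F = (\<lambda>t. 0)"
  shows "\<exists>H\<in>E p q. F = dV G p q H"
proof -
  have "F \<in> {f \<in> Alc G TG TA p (Suc q). dv G p (Suc q) f = (\<lambda>_. 0)}"
    using F d by (simp add: EE_def dv_apply fun_eq_iff)
  moreover have S: "{f \<in> Alc G TG TA p (Suc q). dv G p (Suc q) f = (\<lambda>_. 0)} = dv G p q ` Alc G TG TA p q"
    using col by (simp add: column_exact_def)
  ultimately have "F \<in> dv G p q ` Alc G TG TA p q" by simp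
  then obtain H0 where H0: "H0 \<in> Alc G TG TA p q" "F = dv G p q H0" by blast
  define H1 where "H1 = (\<lambda>t. alt p (H0 t))"
  have FH1: "F = dV G p q H1"
    using H0(2) by (simp add: H1_def dV_alt dv_apply fun_eq_iff)
  obtain U where U: "identity_nbhd G TG U" "continuous_map (XX p q U) TA H0"
    using H0(1) Alc_iff by blast
  have cH1: "continuous_map (XX p q U) TA H1" unfolding H1_def by (rule cont_alt[OF U(2)])
  define H where "H = (\<lambda>t. if t \<in> tuples G p \<times> tuples G q
      then act (fst t 0) (H1 (tr G p (inv (fst t 0)) (fst t), tr G q (inv (fst t 0)) (snd t))) else 0)"
  have eqF: "eqv2 G act p (Suc q) F" using F by (simp add: EE_def)
  have suppF: "\<forall>t. t \<notin> tuples G p \<times> tuples G (Suc q) \<longrightarrow> F t = 0" using F EE_iff by blast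
  have "dV G p q H = F"
  proof (rule ext)
    fix t
    show "dV G p q H t = F t"
    proof (cases "t \<in> tuples G p \<times> tuples G (Suc q)")
      case True
      define x where "x = fst t"
      define y where "y = snd t"
      have x: "x \<in> tuples G p" and y: "y \<in> tuples G (Suc q)" using True by (auto simp: x_def y_def)
      define g where "g = x 0"
      have g: "g \<in> carrier G" using tuples_mem[OF x] by (simp add: g_def)
      have t: "t = (x, y)" by (simp add: x_def y_def)
      have "dV G p q H t = (\<Sum>j\<le>Suc q. alt j (act g (H1 (tr G p (inv g) x, tr G q (inv g) (face q j y)))))"
        using x y by (simp add: t dV_def H_def face_tuples g_def)
      also have "\<dots> = act g (\<Sum>j\<le>Suc q. alt j (H1 (tr G p (inv g) x, face q j (tr G (Suc q) (inv g) y))))"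
        using g by (simp add: act_sum act_alt tr_face)
      also have "\<dots> = act g (dV G p q H1 (tr G p (inv g) x, tr G (Suc q) (inv g) y))"
        using g x y by (simp add: dV_def tr_tuples)
      also have "\<dots> = act g (act (inv g) (F (x, y)))"
        using eqF g x y by (simp add: FH1[symmetric] eqv2_def)
      also have "\<dots> = F t"
        using g by (simp add: act_mult[symmetric] act_one t)
      finally show ?thesis .
    next
      case False
      then have "F t = 0" using suppF by blast
      then show ?thesis using False by (simp add: dV_def)
    qed
  qed
  moreover have "H \<in> E p q"
    unfolding EE_iff
  proof (intro conjI exI)
    show "\<forall>t. t \<notin> tuples G p \<times> tuples G q \<longrightarrow> H t = 0" by (simp add: H_def)
    show "identity_nbhd G TG U" by (rule U(1))
    have c: "continuous_map (XX p q U) TA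
        (\<lambda>t. act (fst t 0) (H1 (tr G p (inv (fst t 0)) (fst t), tr G q (inv (fst t 0)) (snd t))))"
    proof (intro cont_act pull[OF cH1] into_XX cont_tr cont_inv cont_comp_proj[OF XX_fst] XX_fst XX_snd)
      fix t assume "t \<in> topspace (XX p q U)"
      then have t: "fst t \<in> tuples G p" "snd t \<in> Gamma G U q" by (auto simp: top_XX)
      then have "fst t 0 \<in> carrier G" by (simp add: tuples_mem)
      then show "tr G p (inv (fst t 0)) (fst t) \<in> tuples G p \<and> tr G q (inv (fst t 0)) (snd t) \<in> Gamma G U q"
        using t by (simp add: tr_tuples tr_Gamma)
    qed simp_all
    show "continuous_map (XX p q U) TA H"
      by (rule continuous_map_eq[OF c]) (use Gamma_sub in \<open>auto simp: top_XX H_def\<close>)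
    show "eqv2 G act p q H"
      unfolding eqv2_def
    proof (intro ballI)
      fix g x y assume g: "g \<in> carrier G" and x: "x \<in> tuples G p" and y: "y \<in> tuples G q"
      have x0: "x 0 \<in> carrier G" using tuples_mem[OF x] by simp
      have tx0: "tr G p g x 0 = g \<otimes> x 0" by (simp add: tr_def)
      have "H (tr G p g x, tr G q g y)
          = act (g \<otimes> x 0) (H1 (tr G p (inv (g \<otimes> x 0) \<otimes> g) x, tr G q (inv (g \<otimes> x 0) \<otimes> g) y))"
        using g x y x0 by (simp add: H_def tr_tuples tx0 tr_tr)
      also have "\<dots> = act g (act (x 0) (H1 (tr G p (inv (x 0)) x, tr G q (inv (x 0)) y)))"
        using g x0 by (simp add: inv_cancel2 act_mult)
      also have "\<dots> = act g (H (x, y))" using x y by (simp add: H_def)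
      finally show "H (tr G p g x, tr G q g y) = act g (H (x, y))" .
    qed
  qed
  ultimately show ?thesis by blast
qed

lemma R0:
  assumes F: "F \<in> E 0 q" and d: "dH G 0 q F = (\<lambda>t. 0)"
  shows "\<exists>u\<in>CL q. F = rho G q u"
proof -
  define u where "u = (\<lambda>y. if y \<in> tuples G q then F ((\<lambda>i\<in>{..0::nat}. y 0), y) else 0)"
  have suppF: "\<forall>t. t \<notin> tuples G 0 \<times> tuples G q \<longrightarrow> F t = 0" using F EE_iff by blast
  have eqF: "eqv2 G act 0 q F" using F by (simp add: EE_def)
  obtain U where U: "identity_nbhd G TG U" "continuous_map (XX 0 q U) TA F" using F EE_iff by blast
  have "F = rho G q u"
  proof (rule ext)
    fix t
    show "F t = rho G q u t"
    proof (cases "t \<in> tuples G 0 \<times> tuples G q")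
      case True
      define x where "x = fst t"
      define y where "y = snd t"
      have x: "x \<in> tuples G 0" and y: "y \<in> tuples G q" using True by (auto simp: x_def y_def)
      have t: "t = (x, y)" by (simp add: x_def y_def)
      define x' where "x' = (\<lambda>i\<in>{..Suc 0}. if i = 0 then y 0 else x 0)"
      have x': "x' \<in> tuples G (Suc 0)"
        using tuples_mem[OF x, of 0] tuples_mem[OF y, of 0] by (auto simp: x'_def tuples_def)
      have f0: "face 0 0 x' = x"
        using x by (auto simp: face_def x'_def fun_eq_iff tuples_ext)
      have f1: "face 0 1 x' = (\<lambda>i\<in>{..0::nat}. y 0)"
        by (auto simp: face_def x'_def fun_eq_iff)
      have "dH G 0 q F (x', y) = 0" using d by simp
      then have "F (x, y) - F ((\<lambda>i\<in>{..0::nat}. y 0), y) = 0"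
        using x' y f0 f1 by (simp add: dH_def sum.atMost_Suc alt_Suc)
      then show ?thesis using x y by (simp add: t rho_def u_def)
    next
      case False
      then have "F t = 0" using suppF by blast
      then show ?thesis using False by (simp add: rho_def)
    qed
  qed
  moreover have "u \<in> CL q"
    unfolding Clc_def
  proof (intro CollectI conjI exI)
    show "supported G q u" by (simp add: supported_def u_def)
    show "equivariant G act q u"
      unfolding equivariant_def
    proof (intro ballI)
      fix g y assume g: "g \<in> carrier G" and y: "y \<in> tuples G q"
      have "(\<lambda>i\<in>{..0::nat}. tr G q g y 0) = tr G 0 g (\<lambda>i\<in>{..0::nat}. y 0)"
        by (simp add: tr_def fun_eq_iff)
      moreover have "(\<lambda>i\<in>{..0::nat}. y 0) \<in> tuples G 0"
        using tuples_mem[OF y, of 0] by (auto simp: tuples_def)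
      ultimately have "u (tr G q g y) = act g (u y)"
        using g y eqF by (simp add: u_def tr_tuples eqv2_def)
      then show "u (\<lambda>i\<in>{..q}. g \<otimes> y i) = act g (u y)" by (simp add: tr_def)
    qed
    show "identity_nbhd G TG U" by (rule U(1))
    have sid: "continuous_map (subtopology (tuple_top TG q) (Gamma G U q)) (tuple_top TG q) (\<lambda>y. y)"
      by simp
    have c: "continuous_map (subtopology (tuple_top TG q) (Gamma G U q)) TA
              (\<lambda>y. F ((\<lambda>i\<in>{..0::nat}. y 0), y))"
    proof (intro pull[OF U(2)] into_XX sid cont_into_tuple)
      fix k :: nat assume "k \<le> 0"
      then show "continuous_map (subtopology (tuple_top TG q) (Gamma G U q)) TG (\<lambda>t. (\<lambda>i\<in>{..0::nat}. t 0) k)"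
        using cont_comp_proj[OF sid, of 0] by simp
    next
      fix t assume "t \<in> topspace (subtopology (tuple_top TG q) (Gamma G U q))"
      then have t: "t \<in> Gamma G U q" by simp
      then have "t 0 \<in> carrier G" using Gamma_sub tuples_mem by blast
      then show "(\<lambda>i\<in>{..0::nat}. t 0) \<in> tuples G 0 \<and> t \<in> Gamma G U q"
        using t by (auto simp: tuples_def)
    qed simp
    show "continuous_map (subtopology (tuple_top TG q) (Gamma G U q)) TA u"
      by (rule continuous_map_eq[OF c]) (use Gamma_sub in \<open>auto simp: u_def top_tuple\<close>)
  qed
  ultimately show ?thesis by blast
qed

lemma R1:
  assumes F: "F \<in> E (Suc p) q" and d: "dH G (Suc p) q F = (\<lambda>t. 0)"
  shows "\<exists>H\<in>E p q. F = dH G p q H"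
proof -
  define H where "H = (\<lambda>t. if t \<in> tuples G p \<times> tuples G q then F (cns p (snd t 0) (fst t), snd t) else 0)"
  have suppF: "\<forall>t. t \<notin> tuples G (Suc p) \<times> tuples G q \<longrightarrow> F t = 0" using F EE_iff by blast
  have eqF: "eqv2 G act (Suc p) q F" using F by (simp add: EE_def)
  obtain U where U: "identity_nbhd G TG U" "continuous_map (XX (Suc p) q U) TA F" using F EE_iff by blast
  have "F = dH G p q H"
  proof (rule ext)
    fix t
    show "F t = dH G p q H t"
    proof (cases "t \<in> tuples G (Suc p) \<times> tuples G q")
      case True
      define x where "x = fst t"
      define y where "y = snd t"
      have x: "x \<in> tuples G (Suc p)" and y: "y \<in> tuples G q" using True by (auto simp: x_def y_def)
      have t: "t = (x, y)" by (simp add: x_def y_def)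
      have y0: "y 0 \<in> carrier G" using tuples_mem[OF y] by simp
      have c: "cns (Suc p) (y 0) x \<in> tuples G (Suc (Suc p))" by (rule cns_tuples[OF y0 x])
      have "dH G (Suc p) q F (cns (Suc p) (y 0) x, y) = 0" using d by simp
      then have "F (x, y) + (\<Sum>i\<le>Suc p. alt (Suc i) (F (cns p (y 0) (face p i x), y))) = 0"
        using c y x by (simp add: dH_def sum.atMost_Suc_shift face_cns_0 face_cns_Suc)
      then have "F (x, y) - (\<Sum>i\<le>Suc p. alt i (H (face p i x, y))) = 0"
        using x y by (simp add: alt_Suc H_def face_tuples sum_negf)
      then show ?thesis using x y by (simp add: t dH_def)
    next
      case False
      then have "F t = 0" using suppF by blast
      then show ?thesis using False by (simp add: dH_def)
    qed
  qed
  moreover have "H \<in> E p q"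
    unfolding EE_iff
  proof (intro conjI exI)
    show "\<forall>t. t \<notin> tuples G p \<times> tuples G q \<longrightarrow> H t = 0" by (simp add: H_def)
    show "identity_nbhd G TG U" by (rule U(1))
    have c: "continuous_map (XX p q U) TA (\<lambda>t. F (cns p (snd t 0) (fst t), snd t))"
    proof (intro pull[OF U(2)] into_XX cont_cns cont_comp_proj[OF XX_snd] XX_fst XX_snd)
      fix t assume "t \<in> topspace (XX p q U)"
      then have t: "fst t \<in> tuples G p" "snd t \<in> Gamma G U q" by (auto simp: top_XX)
      then have "snd t 0 \<in> carrier G" using Gamma_sub tuples_mem by blast
      then show "cns p (snd t 0) (fst t) \<in> tuples G (Suc p) \<and> snd t \<in> Gamma G U q"
        using t by (simp add: cns_tuples)
    qed simp
    show "continuous_map (XX p q U) TA H"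
      by (rule continuous_map_eq[OF c]) (use Gamma_sub in \<open>auto simp: top_XX H_def\<close>)
    show "eqv2 G act p q H"
      unfolding eqv2_def
    proof (intro ballI)
      fix g x y assume g: "g \<in> carrier G" and x: "x \<in> tuples G p" and y: "y \<in> tuples G q"
      have y0: "y 0 \<in> carrier G" using tuples_mem[OF y] by simp
      have ty0: "tr G q g y 0 = g \<otimes> y 0" by (simp add: tr_def)
      have "H (tr G p g x, tr G q g y) = F (tr G (Suc p) g (cns p (y 0) x), tr G q g y)"
        using g x y by (simp add: H_def tr_tuples ty0 cns_tr)
      also have "\<dots> = act g (H (x, y))"
        using eqF g x y y0 by (simp add: H_def eqv2_def cns_tuples)
      finally show "H (tr G p g x, tr G q g y) = act g (H (x, y))" .
    qed
  qed
  ultimately show ?thesis by blast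
qed

end


lemma rho_zero: "rho G q (\<lambda>t. 0) = (\<lambda>t. 0)"
  by (simp add: rho_def fun_eq_iff)

lemma supported_dhom: "supported G (Suc n) (dhom G n f)"
  by (simp add: supported_def dhom_def)

context tgm begin

definition chain :: "nat \<Rightarrow> ((nat \<Rightarrow> 'g) \<Rightarrow> 'a) \<Rightarrow> ((nat \<Rightarrow> 'g) \<Rightarrow> 'a)
     \<Rightarrow> (nat \<Rightarrow> (nat \<Rightarrow> 'g) \<times> (nat \<Rightarrow> 'g) \<Rightarrow> 'a) \<Rightarrow> bool" where
  "chain m z w a \<longleftrightarrow> (\<forall>k\<le>m. a k \<in> E k (m - k))
     \<and> rho G (Suc m) z = dV G 0 m (a 0)
     \<and> (\<forall>k<m. dV G (Suc k) (m - Suc k) (a (Suc k)) = dH G k (m - k) (a k))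
     \<and> aug G (Suc m) w = dH G m 0 (a m)"

lemma chain_diff:
  assumes "chain m z w a" "chain m z' w' a'"
  shows "chain m (\<lambda>t. z t - z' t) (\<lambda>t. w t - w' t) (\<lambda>k t. a k t - a' k t)"
  using assms unfolding chain_def
  by (simp add: E_diff rho_diff aug_diff dV_diff dH_diff)

lemma chain_alt:
  assumes "chain m z w a"
  shows "chain m (\<lambda>t. alt c (z t)) (\<lambda>t. alt c (w t)) (\<lambda>k t. alt c (a k t))"
  using assms unfolding chain_def
  by (simp add: E_alt rho_alt aug_alt dV_alt dH_alt)

lemma dV_next:
  assumes a: "\<forall>j\<le>k. a j \<in> E j (m - j)" and r: "rho G (Suc m) z = dV G 0 m (a 0)"
    and c: "\<forall>j<k. dV G (Suc j) (m - Suc j) (a (Suc j)) = dH G j (m - j) (a j)"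
    and k: "k \<le> m"
  shows "dV G (Suc k) (m - k) (dH G k (m - k) (a k)) = (\<lambda>t. 0)"
proof -
  have "dV G (Suc k) (m - k) (dH G k (m - k) (a k)) = dH G k (Suc (m - k)) (dV G k (m - k) (a k))"
    by (rule dV_dH)
  also have "\<dots> = (\<lambda>t. 0)"
  proof (cases k)
    case 0
    then show ?thesis by (simp add: r[symmetric] dH_rho)
  next
    case (Suc k')
    have mk: "m - k' = Suc (m - k)" using k Suc by arith
    have "dV G k (m - k) (a k) = dH G k' (m - k') (a k')"
      using c Suc k by simp
    then show ?thesis using Suc mk by (simp add: dH_dH)
  qed
  finally show ?thesis .
qed

end

context tgm_col begin

lemma Z1:
  assumes z: "z \<in> CL (Suc m)" and dz: "dhom G (Suc m) z = (\<lambda>t. 0)"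
  shows "\<exists>w a. w \<in> CC (Suc m) \<and> dhom G (Suc m) w = (\<lambda>t. 0) \<and> chain m z w a"
proof -
  have P: "k \<le> m \<Longrightarrow> \<exists>a. (\<forall>j\<le>k. a j \<in> E j (m - j)) \<and> rho G (Suc m) z = dV G 0 m (a 0)
       \<and> (\<forall>j<k. dV G (Suc j) (m - Suc j) (a (Suc j)) = dH G j (m - j) (a j))" for k
  proof (induction k)
    case 0
    have "rho G (Suc m) z \<in> E 0 (Suc m)" by (rule E_rho[OF z])
    moreover have "dV G 0 (Suc m) (rho G (Suc m) z) = (\<lambda>t. 0)"
      by (simp add: dV_rho dz rho_zero)
    ultimately obtain H where H: "H \<in> E 0 m" "rho G (Suc m) z = dV G 0 m H"
      using C1 by blast
    show ?case by (rule exI[of _ "\<lambda>_. H"]) (use H in auto)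
  next
    case (Suc k)
    then obtain a where a: "\<forall>j\<le>k. a j \<in> E j (m - j)" "rho G (Suc m) z = dV G 0 m (a 0)"
       "\<forall>j<k. dV G (Suc j) (m - Suc j) (a (Suc j)) = dH G j (m - j) (a j)" by auto
    have mk: "m - k = Suc (m - Suc k)" using Suc.prems by arith
    have ak: "a k \<in> E k (m - k)" using a(1) by blast
    have X: "dH G k (m - k) (a k) \<in> E (Suc k) (Suc (m - Suc k))"
      using E_dH[OF ak] mk by simp
    have "dV G (Suc k) (m - k) (dH G k (m - k) (a k)) = (\<lambda>t. 0)"
      by (rule dV_next[OF a]) (use Suc.prems in simp)
    then have "dV G (Suc k) (Suc (m - Suc k)) (dH G k (m - k) (a k)) = (\<lambda>t. 0)" using mk by simp
    then obtain H where H: "H \<in> E (Suc k) (m - Suc k)"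
      "dH G k (m - k) (a k) = dV G (Suc k) (m - Suc k) H"
      using C1[OF X] by blast
    show ?case
    proof (rule exI[of _ "a(Suc k := H)"], intro conjI allI impI)
      fix j assume "j \<le> Suc k"
      then show "(a(Suc k := H)) j \<in> E j (m - j)" using a(1) H(1) by (cases "j = Suc k") auto
    next
      show "rho G (Suc m) z = dV G 0 m ((a(Suc k := H)) 0)" using a(2) by simp
    next
      fix j assume j: "j < Suc k"
      show "dV G (Suc j) (m - Suc j) ((a(Suc k := H)) (Suc j)) = dH G j (m - j) ((a(Suc k := H)) j)"
      proof (cases "j = k")
        case True then show ?thesis using H(2) by simp
      next
        case False then show ?thesis using a(3) j by simp
      qed
    qed
  qed
  obtain a where a: "\<forall>j\<le>m. a j \<in> E j (m - j)" "rho G (Suc m) z = dV G 0 m (a 0)"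
       "\<forall>j<m. dV G (Suc j) (m - Suc j) (a (Suc j)) = dH G j (m - j) (a j)"
    using P[of m] by auto
  have X: "dH G m 0 (a m) \<in> E (Suc m) 0"
    using E_dH[of "a m" m 0] a(1)[rule_format, of m] by simp
  have "dV G (Suc m) (m - m) (dH G m (m - m) (a m)) = (\<lambda>t. 0)"
    by (rule dV_next[OF a]) simp
  then have "dV G (Suc m) 0 (dH G m 0 (a m)) = (\<lambda>t. 0)" by simp
  then obtain w where w: "w \<in> CC (Suc m)" "dH G m 0 (a m) = aug G (Suc m) w"
    using C0[OF X] by blast
  have "aug G (Suc (Suc m)) (dhom G (Suc m) w) = dH G (Suc m) 0 (aug G (Suc m) w)"
    by (simp add: dH_aug)
  also have "\<dots> = (\<lambda>t. 0)" by (simp add: w(2)[symmetric] dH_dH)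
  finally have "dhom G (Suc m) w = (\<lambda>t. 0)"
    by (rule aug_inj[OF grp supported_dhom])
  moreover have "chain m z w a"
    unfolding chain_def using a w(2) by simp
  ultimately show ?thesis using w(1) by blast
qed

lemma Z2:
  assumes ch: "chain m z w a" and u: "u \<in> CL m" and zu: "z = dhom G m u"
    and w: "w \<in> CC (Suc m)"
  shows "\<exists>c\<in>CC m. w = dhom G m c"
proof -
  have a: "\<forall>k\<le>m. a k \<in> E k (m - k)" "rho G (Suc m) z = dV G 0 m (a 0)"
    "\<forall>k<m. dV G (Suc k) (m - Suc k) (a (Suc k)) = dH G k (m - k) (a k)"
    "aug G (Suc m) w = dH G m 0 (a m)"
    using ch by (auto simp: chain_def)
  have I: "k \<le> m \<Longrightarrow> \<exists>Y\<in>E k (m - k). dV G k (m - k) (\<lambda>t. a k t - Y t) = (\<lambda>t. 0)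
       \<and> dH G k (m - k) Y = (\<lambda>t. 0)" for k
  proof (induction k)
    case 0
    have "dV G 0 m (\<lambda>t. a 0 t - rho G m u t) = (\<lambda>t. 0)"
      using a(2) zu by (simp add: dV_diff dV_rho[symmetric])
    then show ?case using E_rho[OF u] by (auto simp: dH_rho)
  next
    case (Suc k)
    then obtain Y where Y: "Y \<in> E k (m - k)" "dV G k (m - k) (\<lambda>t. a k t - Y t) = (\<lambda>t. 0)"
       "dH G k (m - k) Y = (\<lambda>t. 0)" by auto
    have mk: "m - k = Suc (m - Suc k)" using Suc.prems by arith
    have ak: "a k \<in> E k (m - k)" using a(1) Suc.prems by simp
    have D: "(\<lambda>t. a k t - Y t) \<in> E k (Suc (m - Suc k))"
      using E_diff[OF ak Y(1)] mk by simp
    obtain b where b: "b \<in> E k (m - Suc k)" "(\<lambda>t. a k t - Y t) = dV G k (m - Suc k) b"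
      using C1[OF D] Y(2) mk by auto
    define Y' where "Y' = dH G k (m - Suc k) b"
    have Y'E: "Y' \<in> E (Suc k) (m - Suc k)" unfolding Y'_def by (rule E_dH[OF b(1)])
    have "dV G (Suc k) (m - Suc k) (\<lambda>t. a (Suc k) t - Y' t)
        = (\<lambda>t. dH G k (m - k) (a k) t - dH G k (m - k) (dV G k (m - Suc k) b) t)"
      using a(3) Suc.prems mk by (simp add: dV_diff Y'_def dV_dH)
    also have "\<dots> = (\<lambda>t. dH G k (m - k) Y t)"
      unfolding b(2)[symmetric] by (simp add: dH_diff)
    also have "\<dots> = (\<lambda>t. 0)" using Y(3) by simp
    finally show ?case
      using Y'E by (intro bexI[of _ Y']) (auto simp: Y'_def dH_dH)
  qed
  obtain Y where Y: "Y \<in> E m 0" "dV G m 0 (\<lambda>t. a m t - Y t) = (\<lambda>t. 0)" "dH G m 0 Y = (\<lambda>t. 0)"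
    using I[of m] by auto
  have D: "(\<lambda>t. a m t - Y t) \<in> E m 0" using E_diff[of "a m" m 0 Y] a(1)[rule_format, of m] Y(1) by simp
  obtain c where c: "c \<in> CC m" "(\<lambda>t. a m t - Y t) = aug G m c" using C0[OF D Y(2)] by blast
  have "aug G (Suc m) (dhom G m c) = dH G m 0 (\<lambda>t. a m t - Y t)" by (simp add: c(2) dH_aug)
  also have "\<dots> = aug G (Suc m) w" using a(4) Y(3) by (simp add: dH_diff)
  finally have "aug G (Suc m) (\<lambda>t. w t - dhom G m c t) = (\<lambda>t. 0)"
    by (simp add: aug_diff)
  then have "(\<lambda>t. w t - dhom G m c t) = (\<lambda>t. 0)"
    by (rule aug_inj[OF grp, rotated]) (use w supp_CC in \<open>auto simp: supported_def dhom_def\<close>)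
  then have "w = dhom G m c" by (simp add: fun_eq_iff)
  then show ?thesis using c(1) by blast
qed

lemma Z5:
  assumes ch: "chain m z w a" and c: "c \<in> CC m" and wc: "w = dhom G m c"
    and z: "z \<in> CL (Suc m)"
  shows "\<exists>u\<in>CL m. z = dhom G m u"
proof -
  have a: "\<forall>k\<le>m. a k \<in> E k (m - k)" "rho G (Suc m) z = dV G 0 m (a 0)"
    "\<forall>k<m. dV G (Suc k) (m - Suc k) (a (Suc k)) = dH G k (m - k) (a k)"
    "aug G (Suc m) w = dH G m 0 (a m)"
    using ch by (auto simp: chain_def)
  have J: "i \<le> m \<Longrightarrow> \<exists>Y\<in>E (m - i) (m - (m - i)). dH G (m - i) (m - (m - i)) (\<lambda>t. a (m - i) t - Y t) = (\<lambda>t. 0)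
       \<and> dV G (m - i) (m - (m - i)) Y = (\<lambda>t. 0)" for i
  proof (induction i)
    case 0
    have "dH G m 0 (\<lambda>t. a m t - aug G m c t) = (\<lambda>t. 0)"
      using a(4) wc by (simp add: dH_diff dH_aug[symmetric])
    then show ?case using E_aug[OF c] by (auto simp: dV_aug)
  next
    case (Suc i)
    define k where "k = m - Suc i"
    have k1: "m - i = Suc k" and k2: "m - k = Suc (m - Suc k)" and k3: "k < m"
      using Suc.prems by (auto simp: k_def)
    obtain Y where Y: "Y \<in> E (Suc k) (m - Suc k)"
       "dH G (Suc k) (m - Suc k) (\<lambda>t. a (Suc k) t - Y t) = (\<lambda>t. 0)"
       "dV G (Suc k) (m - Suc k) Y = (\<lambda>t. 0)"
      using Suc k1 by auto
    have D: "(\<lambda>t. a (Suc k) t - Y t) \<in> E (Suc k) (m - Suc k)"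
      using E_diff[of "a (Suc k)" "Suc k" "m - Suc k" Y] a(1) Y(1) k3 by simp
    obtain b where b: "b \<in> E k (m - Suc k)" "(\<lambda>t. a (Suc k) t - Y t) = dH G k (m - Suc k) b"
      using R1[OF D Y(2)] by blast
    define Y' where "Y' = dV G k (m - Suc k) b"
    have Y'E: "Y' \<in> E k (m - k)" unfolding Y'_def k2 by (rule E_dV[OF b(1)])
    have "dH G k (m - k) (\<lambda>t. a k t - Y' t)
        = (\<lambda>t. dV G (Suc k) (m - Suc k) (a (Suc k)) t - dV G (Suc k) (m - Suc k) (dH G k (m - Suc k) b) t)"
      using a(3) k3 k2 by (simp add: dH_diff Y'_def dV_dH)
    also have "\<dots> = (\<lambda>t. dV G (Suc k) (m - Suc k) Y t)"
      unfolding b(2)[symmetric] by (simp add: dV_diff)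
    also have "\<dots> = (\<lambda>t. 0)" using Y(3) by simp
    finally have "dH G k (m - k) (\<lambda>t. a k t - Y' t) = (\<lambda>t. 0)" .
    moreover have "dV G k (m - k) Y' = (\<lambda>t. 0)" unfolding Y'_def k2 by (rule dV_dV)
    ultimately show ?case using Y'E by (auto simp: k_def)
  qed
  obtain Y where Y: "Y \<in> E 0 m" "dH G 0 m (\<lambda>t. a 0 t - Y t) = (\<lambda>t. 0)" "dV G 0 m Y = (\<lambda>t. 0)"
    using J[of m] by auto
  have a0: "a 0 \<in> E 0 m" using a(1)[rule_format, of 0] by simp
  have D: "(\<lambda>t. a 0 t - Y t) \<in> E 0 m" by (rule E_diff[OF a0 Y(1)])
  obtain u where u: "u \<in> CL m" "(\<lambda>t. a 0 t - Y t) = rho G m u" using R0[OF D Y(2)] by blast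
  have "rho G (Suc m) (dhom G m u) = dV G 0 m (\<lambda>t. a 0 t - Y t)" by (simp add: u(2) dV_rho)
  also have "\<dots> = rho G (Suc m) z" using a(2) Y(3) by (simp add: dV_diff)
  finally have "rho G (Suc m) (\<lambda>t. z t - dhom G m u t) = (\<lambda>t. 0)"
    by (simp add: rho_diff)
  then have "(\<lambda>t. z t - dhom G m u t) = (\<lambda>t. 0)"
    by (rule rho_inj[OF grp, rotated]) (use z supp_CL in \<open>auto simp: supported_def dhom_def\<close>)
  then have "z = dhom G m u" by (simp add: fun_eq_iff)
  then show ?thesis using u(1) by blast
qed

end


definition jn :: "nat \<Rightarrow> nat \<Rightarrow> (nat \<Rightarrow> 'g) \<Rightarrow> (nat \<Rightarrow> 'g) \<Rightarrow> (nat \<Rightarrow> 'g)" where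
  "jn n k x y = (\<lambda>i\<in>{..n}. if i \<le> k then x i else y (i - Suc k))"

lemma jn_tuples:
  assumes "n = k + Suc l" "x \<in> tuples G k" "y \<in> tuples G l"
  shows "jn n k x y \<in> tuples G n"
  using assms tuples_mem[OF assms(2)] tuples_mem[OF assms(3)]
  by (auto simp: jn_def tuples_def)

lemma jn_tr:
  assumes "n = k + Suc l"
  shows "jn n k (tr G k g x) (tr G l g y) = tr G n g (jn n k x y)"
  using assms by (auto simp: jn_def tr_def fun_eq_iff)

lemma face_jn1:
  assumes "n = k + Suc l"
  shows "face n (Suc k + j) (jn (Suc n) k x y) = jn n k x (face l j y)"
  using assms by (auto simp: face_def jn_def fun_eq_iff Suc_diff_Suc)

lemma face_jn2:
  assumes "i \<le> Suc k"
  shows "face n i (jn (Suc n) (Suc k) x y) = jn n k (face k i x) y"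
  using assms by (auto simp: face_def jn_def fun_eq_iff)

lemma face_jn3: "y \<in> tuples G n \<Longrightarrow> face n 0 (jn (Suc n) 0 x y) = y"
  by (auto simp: face_def jn_def fun_eq_iff tuples_ext)

lemma face_jn4: "x \<in> tuples G n \<Longrightarrow> face n (Suc n) (jn (Suc n) n x y) = x"
  by (auto simp: face_def jn_def fun_eq_iff tuples_ext)

primrec ee :: "nat \<Rightarrow> nat" where
  "ee 0 = 0" | "ee (Suc k) = ee k + Suc k"

lemma alt_ee: "alt (ee k + Suc k) (alt (Suc k) v) = alt (ee k) v"
  by (simp add: alt_alt alt_def)

context tgm begin

lemma cont_jn:
  assumes "n = k + Suc l" "continuous_map X (tuple_top TG k) f" "continuous_map X (tuple_top TG l) g"
  shows "continuous_map X (tuple_top TG n) (\<lambda>t. jn n k (f t) (g t))"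
proof (rule cont_into_tuple)
  fix t show "jn n k (f t) (g t) \<in> extensional {..n}" by (simp add: jn_def)
next
  fix i assume i: "i \<le> n"
  show "continuous_map X TG (\<lambda>t. jn n k (f t) (g t) i)"
  proof (cases "i \<le> k")
    case True then show ?thesis using i cont_comp_proj[OF assms(2), of i] by (simp add: jn_def)
  next
    case False
    then have "i - Suc k \<le> l" using i assms(1) by arith
    then show ?thesis using i False cont_comp_proj[OF assms(3), of "i - Suc k"] by (simp add: jn_def)
  qed
qed

definition JJ :: "nat \<Rightarrow> ((nat \<Rightarrow> 'g) \<Rightarrow> 'a) \<Rightarrow> nat \<Rightarrow> (nat \<Rightarrow> 'g) \<times> (nat \<Rightarrow> 'g) \<Rightarrow> 'a" where
  "JJ m w k = (\<lambda>t. if t \<in> tuples G k \<times> tuples G (m - k) then w (jn (Suc m) k (fst t) (snd t)) else 0)"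

lemma J_E:
  assumes k: "k \<le> m" and w: "w \<in> CC (Suc m)"
  shows "JJ m w k \<in> E k (m - k)"
  unfolding EE_iff
proof (intro conjI exI)
  have n: "Suc m = k + Suc (m - k)" using k by arith
  have cw: "continuous_map (tuple_top TG (Suc m)) TA w" and eqw: "equivariant G act (Suc m) w"
    using w by (auto simp: Cc_def)
  show "\<forall>t. t \<notin> tuples G k \<times> tuples G (m - k) \<longrightarrow> JJ m w k t = 0" by (simp add: JJ_def)
  show "identity_nbhd G TG (carrier G)" by (rule idn_carrier)
  have c: "continuous_map (XX k (m - k) (carrier G)) TA (\<lambda>t. w (jn (Suc m) k (fst t) (snd t)))"
    using continuous_map_compose[OF cont_jn[OF n XX_fst XX_snd] cw] by (simp add: o_def)
  show "continuous_map (XX k (m - k) (carrier G)) TA (JJ m w k)"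
    by (rule continuous_map_eq[OF c]) (use Gamma_sub in \<open>auto simp: top_XX JJ_def\<close>)
  show "eqv2 G act k (m - k) (JJ m w k)"
    unfolding eqv2_def
  proof (intro ballI)
    fix g x y assume g: "g \<in> carrier G" and x: "x \<in> tuples G k" and y: "y \<in> tuples G (m - k)"
    show "JJ m w k (tr G k g x, tr G (m - k) g y) = act g (JJ m w k (x, y))"
      using g x y eqw jn_tuples[OF n x y]
      by (simp add: JJ_def tr_tuples jn_tr[OF n] equivariant_tr)
  qed
qed

lemma I0:
  assumes w: "w \<in> CC (Suc m)" and dw: "dhom G (Suc m) w = (\<lambda>t. 0)"
  shows "dV G 0 m (JJ m w 0) = rho G (Suc m) w"
proof (rule ext)
  fix t
  show "dV G 0 m (JJ m w 0) t = rho G (Suc m) w t"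
  proof (cases "t \<in> tuples G 0 \<times> tuples G (Suc m)")
    case True
    define x where "x = fst t"
    define y where "y = snd t"
    have x: "x \<in> tuples G 0" and y: "y \<in> tuples G (Suc m)" using True by (auto simp: x_def y_def)
    have t: "t = (x, y)" by (simp add: x_def y_def)
    have jt: "jn (Suc (Suc m)) 0 x y \<in> tuples G (Suc (Suc m))" by (rule jn_tuples[OF _ x y]) simp
    have f1: "face (Suc m) (Suc j) (jn (Suc (Suc m)) 0 x y) = jn (Suc m) 0 x (face m j y)" for j
      using face_jn1[of "Suc m" 0 m j x y] by simp
    have "0 = dhom G (Suc m) w (jn (Suc (Suc m)) 0 x y)" using dw by simp
    also have "\<dots> = w y + (\<Sum>j\<le>Suc m. alt (Suc j) (w (jn (Suc m) 0 x (face m j y))))"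
      using jt y by (simp add: dhom_def sum.atMost_Suc_shift face_jn3 f1)
    also have "\<dots> = w y - dV G 0 m (JJ m w 0) t"
      using x y by (simp add: t dV_def JJ_def face_tuples alt_Suc sum_negf)
    finally show ?thesis using x y by (simp add: t rho_def)
  next
    case False
    then show ?thesis by (simp add: dV_def rho_def)
  qed
qed

lemma I1:
  assumes k: "k < m" and w: "w \<in> CC (Suc m)" and dw: "dhom G (Suc m) w = (\<lambda>t. 0)"
  shows "dV G (Suc k) (m - Suc k) (JJ m w (Suc k)) = (\<lambda>t. alt (Suc k) (dH G k (m - k) (JJ m w k) t))"
proof (rule ext)
  fix t
  define l where "l = m - Suc k"
  have mk: "m - k = Suc l" and n2: "Suc (Suc m) = Suc k + Suc (Suc l)" and n1: "Suc m = Suc k + Suc l"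
    using k by (auto simp: l_def)
  show "dV G (Suc k) (m - Suc k) (JJ m w (Suc k)) t = alt (Suc k) (dH G k (m - k) (JJ m w k) t)"
  proof (cases "t \<in> tuples G (Suc k) \<times> tuples G (Suc l)")
    case True
    define x where "x = fst t"
    define y where "y = snd t"
    have x: "x \<in> tuples G (Suc k)" and y: "y \<in> tuples G (Suc l)" using True by (auto simp: x_def y_def)
    have t: "t = (x, y)" by (simp add: x_def y_def)
    have jt: "jn (Suc (Suc m)) (Suc k) x y \<in> tuples G (Suc (Suc m))" by (rule jn_tuples[OF n2 x y])
    have f1: "face (Suc m) (Suc (Suc k) + j) (jn (Suc (Suc m)) (Suc k) x y)
              = jn (Suc m) (Suc k) x (face l j y)" for j
      using face_jn1[OF n1, of j x y] by simp
    have altj: "alt (Suc (Suc k) + j) v = alt k (alt j v)" for j v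
      by (simp add: alt_def)
    have f2: "i \<le> Suc k \<Longrightarrow> face (Suc m) i (jn (Suc (Suc m)) (Suc k) x y) = jn (Suc m) k (face k i x) y" for i
      by (rule face_jn2)
    have "0 = dhom G (Suc m) w (jn (Suc (Suc m)) (Suc k) x y)" using dw by simp
    also have "\<dots> = (\<Sum>i\<le>Suc k + Suc (Suc l). alt i (w (face (Suc m) i (jn (Suc (Suc m)) (Suc k) x y))))"
      using jt n2 by (simp add: dhom_def)
    also have "\<dots> = (\<Sum>i\<le>Suc k. alt i (w (face (Suc m) i (jn (Suc (Suc m)) (Suc k) x y))))
         + (\<Sum>j\<le>Suc l. alt (Suc (Suc k) + j) (w (face (Suc m) (Suc (Suc k) + j) (jn (Suc (Suc m)) (Suc k) x y))))"
      by (rule sum_split_shift)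
    also have "(\<Sum>i\<le>Suc k. alt i (w (face (Suc m) i (jn (Suc (Suc m)) (Suc k) x y))))
        = (\<Sum>i\<le>Suc k. alt i (w (jn (Suc m) k (face k i x) y)))"
      by (rule sum.cong) (simp_all add: f2)
    also have "(\<Sum>j\<le>Suc l. alt (Suc (Suc k) + j) (w (face (Suc m) (Suc (Suc k) + j) (jn (Suc (Suc m)) (Suc k) x y))))
        = (\<Sum>j\<le>Suc l. alt k (alt j (w (jn (Suc m) (Suc k) x (face l j y)))))"
      by (rule sum.cong) (simp_all only: f1 altj)
    also have "(\<Sum>i\<le>Suc k. alt i (w (jn (Suc m) k (face k i x) y))) = dH G k (m - k) (JJ m w k) t"
      using x y mk by (simp add: t dH_def JJ_def face_tuples)
    also have "(\<Sum>j\<le>Suc l. alt k (alt j (w (jn (Suc m) (Suc k) x (face l j y)))))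
        = alt k (dV G (Suc k) (m - Suc k) (JJ m w (Suc k)) t)"
      using x y by (simp add: t dV_def JJ_def face_tuples l_def[symmetric] alt_sum)
    finally have "alt k (dV G (Suc k) (m - Suc k) (JJ m w (Suc k)) t) = - dH G k (m - k) (JJ m w k) t"
      by (simp add: eq_neg_iff_add_eq_0 add.commute)
    then have "dV G (Suc k) (m - Suc k) (JJ m w (Suc k)) t = alt k (- dH G k (m - k) (JJ m w k) t)"
      by (metis alt_self)
    then show ?thesis by (simp add: alt_neg alt_Suc)
  next
    case False
    then show ?thesis using mk by (simp add: dV_def dH_def l_def)
  qed
qed

lemma I2:
  assumes w: "w \<in> CC (Suc m)" and dw: "dhom G (Suc m) w = (\<lambda>t. 0)"
  shows "dH G m 0 (JJ m w m) = aug G (Suc m) (\<lambda>x. alt (Suc m) (w x))"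
proof (rule ext)
  fix t
  show "dH G m 0 (JJ m w m) t = aug G (Suc m) (\<lambda>x. alt (Suc m) (w x)) t"
  proof (cases "t \<in> tuples G (Suc m) \<times> tuples G 0")
    case True
    define x where "x = fst t"
    define y where "y = snd t"
    have x: "x \<in> tuples G (Suc m)" and y: "y \<in> tuples G 0" using True by (auto simp: x_def y_def)
    have t: "t = (x, y)" by (simp add: x_def y_def)
    have jt: "jn (Suc (Suc m)) (Suc m) x y \<in> tuples G (Suc (Suc m))" by (rule jn_tuples[OF _ x y]) simp
    have f2: "i \<le> Suc m \<Longrightarrow> face (Suc m) i (jn (Suc (Suc m)) (Suc m) x y) = jn (Suc m) m (face m i x) y" for i
      by (rule face_jn2)
    have "0 = dhom G (Suc m) w (jn (Suc (Suc m)) (Suc m) x y)" using dw by simp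
    also have "\<dots> = (\<Sum>i\<le>Suc m. alt i (w (jn (Suc m) m (face m i x) y))) + alt (Suc (Suc m)) (w x)"
      using jt x by (simp add: dhom_def sum.atMost_Suc f2 face_jn4)
    also have "(\<Sum>i\<le>Suc m. alt i (w (jn (Suc m) m (face m i x) y))) = dH G m 0 (JJ m w m) t"
      using x y by (simp add: t dH_def JJ_def face_tuples)
    finally have "dH G m 0 (JJ m w m) t = - alt (Suc (Suc m)) (w x)"
      by (simp add: eq_neg_iff_add_eq_0)
    then show ?thesis using x y by (simp add: t aug_apply alt_Suc)
  next
    case False
    then show ?thesis by (simp add: dH_def aug_apply)
  qed
qed

lemma Z3:
  assumes w: "w \<in> CC (Suc m)" and dw: "dhom G (Suc m) w = (\<lambda>t. 0)"
  shows "chain m w (\<lambda>t. alt (ee m + Suc m) (w t)) (\<lambda>k t. alt (ee k) (JJ m w k t))"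
  unfolding chain_def
proof (intro conjI allI impI)
  fix k assume "k \<le> m"
  then show "(\<lambda>t. alt (ee k) (JJ m w k t)) \<in> E k (m - k)" by (intro E_alt J_E w)
next
  show "rho G (Suc m) w = dV G 0 m (\<lambda>t. alt (ee 0) (JJ m w 0 t))"
    using I0[OF w dw] by simp
next
  fix k assume k: "k < m"
  have "dV G (Suc k) (m - Suc k) (\<lambda>t. alt (ee (Suc k)) (JJ m w (Suc k) t))
      = (\<lambda>t. alt (ee k + Suc k) (alt (Suc k) (dH G k (m - k) (JJ m w k) t)))"
    by (simp add: dV_alt I1[OF k w dw])
  also have "\<dots> = dH G k (m - k) (\<lambda>t. alt (ee k) (JJ m w k t))"
    by (simp only: alt_ee dH_alt)
  finally show "dV G (Suc k) (m - Suc k) (\<lambda>t. alt (ee (Suc k)) (JJ m w (Suc k) t))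
      = dH G k (m - k) (\<lambda>t. alt (ee k) (JJ m w k t))" .
next
  show "aug G (Suc m) (\<lambda>t. alt (ee m + Suc m) (w t)) = dH G m 0 (\<lambda>t. alt (ee m) (JJ m w m t))"
    by (simp add: dH_alt I2[OF w dw] aug_alt alt_alt)
qed

end


lemma coset_eq_iff:
  assumes S0: "(\<lambda>t. 0) \<in> S" and Sd: "\<And>a b. a \<in> S \<Longrightarrow> b \<in> S \<Longrightarrow> (\<lambda>t. a t - b t) \<in> S"
  shows "(\<lambda>b. (\<lambda>x. z x + b x)) ` S = (\<lambda>b. (\<lambda>x. z' x + b x)) ` S
     \<longleftrightarrow> (\<lambda>x. (z x :: 'a::ab_group_add) - z' x) \<in> S"
proof
  assume eq: "(\<lambda>b. (\<lambda>x. z x + b x)) ` S = (\<lambda>b. (\<lambda>x. z' x + b x)) ` S"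
  have "(\<lambda>x. z x + (\<lambda>t. 0) x) \<in> (\<lambda>b. (\<lambda>x. z x + b x)) ` S" by (rule imageI[OF S0])
  then have "z \<in> (\<lambda>b. (\<lambda>x. z' x + b x)) ` S" using eq by simp
  then obtain b where b: "b \<in> S" "z = (\<lambda>x. z' x + b x)" by blast
  have "(\<lambda>x. z x - z' x) = b" using b(2) by (simp add: fun_eq_iff)
  then show "(\<lambda>x. z x - z' x) \<in> S" using b(1) by simp
next
  assume d: "(\<lambda>x. z x - z' x) \<in> S"
  have nd: "(\<lambda>x. 0 - (z x - z' x)) \<in> S" using Sd[OF S0 d] by simp
  show "(\<lambda>b. (\<lambda>x. z x + b x)) ` S = (\<lambda>b. (\<lambda>x. z' x + b x)) ` S"
  proof (intro equalityI subsetI)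
    fix f assume "f \<in> (\<lambda>b. (\<lambda>x. z x + b x)) ` S"
    then obtain b where b: "b \<in> S" "f = (\<lambda>x. z x + b x)" by blast
    have "(\<lambda>x. b x - (0 - (z x - z' x))) \<in> S" using Sd[OF b(1) nd] by simp
    moreover have "f = (\<lambda>x. z' x + (b x - (0 - (z x - z' x))))" using b(2) by (simp add: fun_eq_iff)
    ultimately show "f \<in> (\<lambda>b. (\<lambda>x. z' x + b x)) ` S"
      by (auto intro!: image_eqI[where x="\<lambda>x. b x - (0 - (z x - z' x))"])
  next
    fix f assume "f \<in> (\<lambda>b. (\<lambda>x. z' x + b x)) ` S"
    then obtain b where b: "b \<in> S" "f = (\<lambda>x. z' x + b x)" by blast
    have "(\<lambda>x. b x - (z x - z' x)) \<in> S" using Sd[OF b(1) d] by simp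
    moreover have "f = (\<lambda>x. z x + (b x - (z x - z' x)))" using b(2) by (simp add: fun_eq_iff)
    ultimately show "f \<in> (\<lambda>b. (\<lambda>x. z x + b x)) ` S"
      by (auto intro!: image_eqI[where x="\<lambda>x. b x - (z x - z' x)"])
  qed
qed

context tgm_col begin

lemma B_CC_0: "(\<lambda>t. 0) \<in> coboundaries G CC n"
proof (cases n)
  case 0 then show ?thesis by (simp add: coboundaries_def)
next
  case (Suc m)
  have "(\<lambda>t. 0) \<in> dhom G m ` CC m"
    by (rule image_eqI[of _ "dhom G m" "\<lambda>t. 0"]) (simp_all add: dhom_zero CC_zero)
  then show ?thesis by (simp add: coboundaries_def Suc)
qed

lemma B_CL_0: "(\<lambda>t. 0) \<in> coboundaries G CL n"
proof (cases n)
  case 0 then show ?thesis by (simp add: coboundaries_def)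
next
  case (Suc m)
  have "(\<lambda>t. 0) \<in> dhom G m ` CL m"
    by (rule image_eqI[of _ "dhom G m" "\<lambda>t. 0"]) (simp_all add: dhom_zero CL_zero)
  then show ?thesis by (simp add: coboundaries_def Suc)
qed

lemma B_CC_diff: "a \<in> coboundaries G CC n \<Longrightarrow> b \<in> coboundaries G CC n \<Longrightarrow> (\<lambda>t. a t - b t) \<in> coboundaries G CC n"
proof (cases n)
  case 0 then show "a \<in> coboundaries G CC n \<Longrightarrow> b \<in> coboundaries G CC n \<Longrightarrow> ?thesis"
    by (simp add: coboundaries_def)
next
  case (Suc m)
  assume "a \<in> coboundaries G CC n" "b \<in> coboundaries G CC n"
  then obtain a' b' where "a' \<in> CC m" "b' \<in> CC m" "a = dhom G m a'" "b = dhom G m b'"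
    using Suc by (auto simp: coboundaries_def)
  then show ?thesis using Suc CC_diff by (auto simp: coboundaries_def dhom_diff[symmetric])
qed

lemma B_CL_diff: "a \<in> coboundaries G CL n \<Longrightarrow> b \<in> coboundaries G CL n \<Longrightarrow> (\<lambda>t. a t - b t) \<in> coboundaries G CL n"
proof (cases n)
  case 0 then show "a \<in> coboundaries G CL n \<Longrightarrow> b \<in> coboundaries G CL n \<Longrightarrow> ?thesis"
    by (simp add: coboundaries_def)
next
  case (Suc m)
  assume "a \<in> coboundaries G CL n" "b \<in> coboundaries G CL n"
  then obtain a' b' where "a' \<in> CL m" "b' \<in> CL m" "a = dhom G m a'" "b = dhom G m b'"
    using Suc by (auto simp: coboundaries_def)
  then show ?thesis using Suc CL_diff by (auto simp: coboundaries_def dhom_diff[symmetric])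
qed

lemma cls_CC_eq: "cls G CC n z = cls G CC n z' \<longleftrightarrow> (\<lambda>x. z x - z' x) \<in> coboundaries G CC n"
  unfolding cls_def by (rule coset_eq_iff[OF B_CC_0 B_CC_diff])

lemma cls_CL_eq: "cls G CL n z = cls G CL n z' \<longleftrightarrow> (\<lambda>x. z x - z' x) \<in> coboundaries G CL n"
  unfolding cls_def by (rule coset_eq_iff[OF B_CL_0 B_CL_diff])

lemma B_sub: "coboundaries G CC n \<subseteq> coboundaries G CL n"
  using CC_sub_CL by (cases n) (auto simp: coboundaries_def)

lemma induced:
  assumes z: "z \<in> cocycles G CC n"
  shows "induced_map G CC CL n (cls G CC n z) = cls G CL n z"
proof -
  have "(\<lambda>x. z x + (\<lambda>t. 0) x) \<in> cls G CC n z" unfolding cls_def by (rule imageI[OF B_CC_0])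
  then have zin: "z \<in> cls G CC n z" by simp
  define z' where "z' = (SOME z'. z' \<in> cls G CC n z)"
  have "z' \<in> cls G CC n z" unfolding z'_def by (rule someI[of "\<lambda>z'. z' \<in> cls G CC n z", OF zin])
  then obtain b where b: "b \<in> coboundaries G CC n" "z' = (\<lambda>x. z x + b x)"
    by (auto simp: cls_def)
  have "(\<lambda>x. z' x - z x) = b" using b(2) by (simp add: fun_eq_iff)
  then have "(\<lambda>x. z' x - z x) \<in> coboundaries G CL n" using b(1) B_sub by auto
  then have "cls G CL n z' = cls G CL n z" by (simp add: cls_CL_eq)
  then show ?thesis by (simp add: induced_map_def z'_def)
qed

lemma inj_part:
  assumes z1: "z1 \<in> cocycles G CC n" and z2: "z2 \<in> cocycles G CC n"
    and eq: "cls G CL n z1 = cls G CL n z2"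
  shows "cls G CC n z1 = cls G CC n z2"
proof -
  have dB: "(\<lambda>x. z1 x - z2 x) \<in> coboundaries G CL n" using eq by (simp add: cls_CL_eq)
  have "(\<lambda>x. z1 x - z2 x) \<in> coboundaries G CC n"
  proof (cases n)
    case 0 then show ?thesis using dB by (simp add: coboundaries_def)
  next
    case (Suc m)
    define d where "d = (\<lambda>x. z1 x - z2 x)"
    have dC: "d \<in> CC (Suc m)" using z1 z2 Suc CC_diff by (simp add: cocycles_def d_def)
    have dd: "dhom G (Suc m) d = (\<lambda>t. 0)" using z1 z2 Suc by (simp add: cocycles_def d_def dhom_diff)
    obtain u where u: "u \<in> CL m" "d = dhom G m u" using dB Suc by (auto simp: coboundaries_def d_def)
    have ch: "chain m d (\<lambda>t. alt (ee m + Suc m) (d t)) (\<lambda>k t. alt (ee k) (JJ m d k t))"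
      by (rule Z3[OF dC dd])
    obtain c where c: "c \<in> CC m" "(\<lambda>t. alt (ee m + Suc m) (d t)) = dhom G m c"
      using Z2[OF ch u(1) u(2) CC_alt[OF dC]] by blast
    have "d = dhom G m (\<lambda>t. alt (ee m + Suc m) (c t))"
      using c(2) by (simp add: dhom_alt fun_eq_iff) (metis alt_self)
    then show ?thesis using Suc CC_alt[OF c(1)] by (auto simp: coboundaries_def d_def)
  qed
  then show ?thesis by (simp add: cls_CC_eq)
qed

lemma surj_part:
  assumes z: "z \<in> cocycles G CL n"
  shows "\<exists>z'\<in>cocycles G CC n. cls G CL n z = cls G CL n z'"
proof (cases n)
  case 0
  then have "z \<in> cocycles G CC n" using z CL0_sub_CC0 by (auto simp: cocycles_def)
  then show ?thesis by blast
next
  case (Suc m)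
  have zC: "z \<in> CL (Suc m)" and dz: "dhom G (Suc m) z = (\<lambda>t. 0)"
    using z Suc by (auto simp: cocycles_def)
  obtain w a where w: "w \<in> CC (Suc m)" "dhom G (Suc m) w = (\<lambda>t. 0)" "chain m z w a"
    using Z1[OF zC dz] by blast
  define c where "c = ee m + Suc m"
  have ch1: "chain m (\<lambda>t. alt c (z t)) (\<lambda>t. alt c (w t)) (\<lambda>k t. alt c (a k t))"
    by (rule chain_alt[OF w(3)])
  have ch2: "chain m w (\<lambda>t. alt c (w t)) (\<lambda>k t. alt (ee k) (JJ m w k t))"
    unfolding c_def by (rule Z3[OF w(1) w(2)])
  have ch3: "chain m (\<lambda>t. alt c (z t) - w t) (\<lambda>t. alt c (w t) - alt c (w t))
      (\<lambda>k t. alt c (a k t) - alt (ee k) (JJ m w k t))"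
    by (rule chain_diff[OF ch1 ch2])
  have w0: "(\<lambda>t. alt c (w t) - alt c (w t)) = dhom G m (\<lambda>t. 0)" by (simp add: dhom_zero)
  have zC': "(\<lambda>t. alt c (z t) - w t) \<in> CL (Suc m)"
    using CL_diff[OF CL_alt[OF zC] CC_sub_CL[THEN subsetD, OF w(1)]] .
  obtain u where u: "u \<in> CL m" "(\<lambda>t. alt c (z t) - w t) = dhom G m u"
    using Z5[OF ch3 CC_zero w0 zC'] by blast
  have "(\<lambda>x. z x - alt c (w x)) = dhom G m (\<lambda>t. alt c (u t))"
    by (simp add: fun_eq_iff dhom_alt u(2)[symmetric] alt_diff)
  then have "(\<lambda>x. z x - alt c (w x)) \<in> coboundaries G CL n"
    using Suc CL_alt[OF u(1)] by (auto simp: coboundaries_def)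
  then have "cls G CL n z = cls G CL n (\<lambda>x. alt c (w x))" by (simp add: cls_CL_eq)
  moreover have "(\<lambda>x. alt c (w x)) \<in> cocycles G CC n"
    using Suc CC_alt[OF w(1)] w(2) by (simp add: cocycles_def dhom_alt)
  ultimately show ?thesis by blast
qed

lemma main_bij:
  "bij_betw (induced_map G CC CL n) (cohom G CC n) (cohom G CL n)"
  unfolding bij_betw_def
proof
  show "inj_on (induced_map G CC CL n) (cohom G CC n)"
  proof (rule inj_onI)
    fix c1 c2 assume c1: "c1 \<in> cohom G CC n" and c2: "c2 \<in> cohom G CC n"
      and eq: "induced_map G CC CL n c1 = induced_map G CC CL n c2"
    obtain z1 where z1: "z1 \<in> cocycles G CC n" "c1 = cls G CC n z1" using c1 by (auto simp: cohom_def)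
    obtain z2 where z2: "z2 \<in> cocycles G CC n" "c2 = cls G CC n z2" using c2 by (auto simp: cohom_def)
    have "cls G CL n z1 = cls G CL n z2" using eq z1 z2 by (simp add: induced)
    then show "c1 = c2" using inj_part[OF z1(1) z2(1)] z1(2) z2(2) by simp
  qed
next
  show "induced_map G CC CL n ` cohom G CC n = cohom G CL n"
  proof (intro equalityI subsetI)
    fix c assume "c \<in> induced_map G CC CL n ` cohom G CC n"
    then obtain z where z: "z \<in> cocycles G CC n" "c = induced_map G CC CL n (cls G CC n z)"
      by (auto simp: cohom_def)
    have "z \<in> cocycles G CL n" using z(1) CC_sub_CL by (auto simp: cocycles_def)
    then show "c \<in> cohom G CL n" using z by (simp add: induced cohom_def)
  next
    fix c assume "c \<in> cohom G CL n"
    then obtain z where z: "z \<in> cocycles G CL n" "c = cls G CL n z" by (auto simp: cohom_def)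
    obtain z' where z': "z' \<in> cocycles G CC n" "cls G CL n z = cls G CL n z'"
      using surj_part[OF z(1)] by blast
    have "c = induced_map G CC CL n (cls G CC n z')" using z z' by (simp add: induced)
    then show "c \<in> induced_map G CC CL n ` cohom G CC n" using z'(1) by (auto simp: cohom_def)
  qed
qed

end

theorem mainTheorem6:
  fixes G :: "('g, 'b) monoid_scheme" and TG :: "'g topology"
    and TA :: "'a::ab_group_add topology" and act :: "'g \<Rightarrow> 'a \<Rightarrow> 'a"
  assumes "topological_G_module G TG TA act"
    and "\<forall>p. column_exact G TG TA p"
  shows "\<forall>n. bij_betw (induced_map G (Cc G TG TA act) (Clc G TG TA act) n)
                     (cohom G (Cc G TG TA act) n) (cohom G (Clc G TG TA act) n)"
proof -
  have "tgm_col G TG TA act"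
    using assms by (simp add: tgm_col_def tgm_def tgm_col_axioms_def)
  then interpret tgm_col G TG TA act .
  show ?thesis using main_bij by blast
qed

end
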